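(* Let $f \in \mathcal{C}_{2\pi}$, let $A_n[f]$ be the Toeplitz matrix generated by $f$ and $c_n[f]$ the optimal circulant preconditioner for $A_n[f]$. For every $\epsilon>0$ there exist positive integers $N$ and $M$ such that for every $n>N$ there are matrices $R_n[f],E_n[f]\in\mathbb{C}^{n\times n}$ with \[ e^{c_n[f]}-e^{A_n[f]} = R_n[f]+E_n[f],\qquad \operatorname{rank} R_n[f]\le 2M,\qquad \|E_n[f]\|_2\le\epsilon. \]
   Context: $\mathcal{C}_{2\pi}$ denotes the Banach space of all $2\pi$-periodic continuous complex-valued functions on $\mathbb{R}$ with the supremum norm $\|\cdot\|_\infty$. For $f\in\mathcal{C}_{2\pi}$ its Fourier coefficients are $a_k=\frac{1}{2\pi}\int_{-\pi}^{\pi} f(\theta)e^{-\mathbf{i}k\theta}\,d\theta$, $k\in\mathbb{Z}$. The Toeplitz matrix generated by $f$ is the $n\times n$ matrix $A_n[f]$ whose $(j,k)$ entry is $a_{j-k}$. The optimal circulant preconditioner $c_n[f]$ is the $n\times n$ circulant matrix whose $(j,k)$ entry is $c_{(j-k)\bmod n}$, where $c_k=\frac{(n-k)a_k+k\,a_{k-n}}{n}$ for $0\le k<n$. For a square matrix $X$, $e^{X}=\sum_{m\ge 0}X^m/m!$. $\|\cdot\|_2$ is the spectral norm. *)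

theory Defs
  imports "HOL-Analysis.Analysis" "Jordan_Normal_Form.Matrix" "Jordan_Normal_Form.DL_Rank"
begin

definition fourier_coeff :: "(real \<Rightarrow> complex) \<Rightarrow> int \<Rightarrow> complex" where
  "fourier_coeff f k = (1 / (2 * of_real pi)) *
     integral {-pi..pi} (\<lambda>t. f t * exp (- \<i> * of_int k * of_real t))"

definition toeplitz_mat :: "nat \<Rightarrow> (real \<Rightarrow> complex) \<Rightarrow> complex mat" where
  "toeplitz_mat n f = mat n n (\<lambda>(j,k). fourier_coeff f (int j - int k))"

definition opt_circ_coeff :: "nat \<Rightarrow> (real \<Rightarrow> complex) \<Rightarrow> nat \<Rightarrow> complex" where
  "opt_circ_coeff n f k =
     ((of_nat n - of_nat k) * fourier_coeff f (int k)
       + of_nat k * fourier_coeff f (int k - int n)) / of_nat n"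

definition opt_circulant :: "nat \<Rightarrow> (real \<Rightarrow> complex) \<Rightarrow> complex mat" where
  "opt_circulant n f = mat n n (\<lambda>(j,k). opt_circ_coeff n f (nat ((int j - int k) mod int n)))"

definition mat_exp :: "complex mat \<Rightarrow> complex mat" where
  "mat_exp X = mat (dim_row X) (dim_col X)
     (\<lambda>(i,j). (\<Sum>m. (X ^\<^sub>m m) $$ (i,j) / of_nat (fact m)))"

definition vec_norm2 :: "complex vec \<Rightarrow> real" where
  "vec_norm2 v = sqrt (\<Sum>i<dim_vec v. (cmod (v $ i))\<^sup>2)"

definition spec_norm :: "complex mat \<Rightarrow> real" where
  "spec_norm X = Sup {vec_norm2 (X *\<^sub>v v) | v. v \<in> carrier_vec (dim_col X) \<and> vec_norm2 v \<le> 1}"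

end

theory Submission
  imports Defs
begin


definition l2 :: "nat \<Rightarrow> (nat \<Rightarrow> complex) \<Rightarrow> real" where
  "l2 n v = sqrt (\<Sum>i<n. (cmod (v i))\<^sup>2)"
definition mv :: "nat \<Rightarrow> (nat \<Rightarrow> nat \<Rightarrow> complex) \<Rightarrow> (nat \<Rightarrow> complex) \<Rightarrow> nat \<Rightarrow> complex" where
  "mv n X v = (\<lambda>i. \<Sum>j<n. X i j * v j)"
definition nb :: "nat \<Rightarrow> (nat \<Rightarrow> nat \<Rightarrow> complex) \<Rightarrow> real \<Rightarrow> bool" where
  "nb n X b \<longleftrightarrow> (\<forall>v. l2 n (mv n X v) \<le> b * l2 n v)"
definition mm :: "nat \<Rightarrow> (nat \<Rightarrow> nat \<Rightarrow> complex) \<Rightarrow> (nat \<Rightarrow> nat \<Rightarrow> complex) \<Rightarrow> nat \<Rightarrow> nat \<Rightarrow> complex" where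
  "mm n X Y = (\<lambda>i j. \<Sum>k<n. X i k * Y k j)"

lemma l2_L2: "l2 n v = L2_set (\<lambda>i. cmod (v i)) {..<n}"
  by (simp add: l2_def L2_set_def)

lemma l2_nonneg: "0 \<le> l2 n v"
  by (simp add: l2_def sum_nonneg)

lemma l2_add: "l2 n (\<lambda>i. u i + v i) \<le> l2 n u + l2 n v"
proof -
  have "l2 n (\<lambda>i. u i + v i) \<le> L2_set (\<lambda>i. cmod (u i) + cmod (v i)) {..<n}"
    unfolding l2_L2 by (rule L2_set_mono) (auto simp: norm_triangle_ineq)
  also have "\<dots> \<le> l2 n u + l2 n v" unfolding l2_L2 by (rule L2_set_triangle_ineq)
  finally show ?thesis .
qed

lemma l2_scale: "l2 n (\<lambda>i. c * v i) = cmod c * l2 n v"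
proof -
  have "(\<Sum>i<n. (cmod (c * v i))\<^sup>2) = (cmod c)\<^sup>2 * (\<Sum>i<n. (cmod (v i))\<^sup>2)"
    by (simp add: norm_mult power_mult_distrib sum_distrib_left)
  thus ?thesis by (simp add: l2_def real_sqrt_mult)
qed

lemma l2_cong: "(\<And>i. i < n \<Longrightarrow> u i = v i) \<Longrightarrow> l2 n u = l2 n v"
  by (simp add: l2_def)

lemma l2_zero: "l2 n (\<lambda>i. 0) = 0" by (simp add: l2_def)

lemma l2_sum: "finite S \<Longrightarrow> l2 n (\<lambda>i. \<Sum>s\<in>S. u s i) \<le> (\<Sum>s\<in>S. l2 n (u s))"
proof (induction S rule: finite_induct)
  case empty thus ?case by (simp add: l2_zero)
next
  case (insert x F)
  have "l2 n (\<lambda>i. \<Sum>s\<in>insert x F. u s i) = l2 n (\<lambda>i. u x i + (\<Sum>s\<in>F. u s i))"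
    using insert by simp
  also have "\<dots> \<le> l2 n (u x) + l2 n (\<lambda>i. \<Sum>s\<in>F. u s i)" by (rule l2_add)
  also have "\<dots> \<le> l2 n (u x) + (\<Sum>s\<in>F. l2 n (u s))" using insert by simp
  finally show ?case using insert by simp
qed

lemma l2_ge_entry: "i < n \<Longrightarrow> cmod (v i) \<le> l2 n v"
proof -
  assume i: "i < n"
  have "(cmod (v i))\<^sup>2 \<le> (\<Sum>i<n. (cmod (v i))\<^sup>2)"
    using i by (intro member_le_sum) auto
  thus ?thesis unfolding l2_def by (metis norm_ge_zero real_le_rsqrt)
qed

lemma mv_cong: "(\<And>i j. i < n \<Longrightarrow> j < n \<Longrightarrow> X i j = Y i j) \<Longrightarrow> i < n \<Longrightarrow> mv n X v i = mv n Y v i"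
  by (simp add: mv_def)

lemma nb_cong: "(\<And>i j. i < n \<Longrightarrow> j < n \<Longrightarrow> X i j = Y i j) \<Longrightarrow> nb n X b \<Longrightarrow> nb n Y b"
proof -
  assume h: "\<And>i j. i < n \<Longrightarrow> j < n \<Longrightarrow> X i j = Y i j" and "nb n X b"
  have "l2 n (mv n Y v) = l2 n (mv n X v)" for v
    by (rule l2_cong) (simp add: mv_cong[OF h])
  thus ?thesis using \<open>nb n X b\<close> by (simp add: nb_def)
qed

lemma nb_mono: "nb n X a \<Longrightarrow> a \<le> b \<Longrightarrow> nb n X b"
  unfolding nb_def by (meson l2_nonneg mult_right_mono order_trans)

lemma nb_nonneg_aux: "nb n X b \<Longrightarrow> n > 0 \<Longrightarrow> 0 \<le> b"
proof -
  assume "nb n X b" "n > 0"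
  hence "l2 n (mv n X (\<lambda>i. 1)) \<le> b * l2 n (\<lambda>i. 1)" by (simp add: nb_def)
  moreover have "l2 n (\<lambda>i::nat. 1::complex) > 0" using \<open>n>0\<close> by (simp add: l2_def)
  ultimately show ?thesis using l2_nonneg[of n "mv n X (\<lambda>i. 1)"]
    by (metis dual_order.trans linorder_not_le mult_neg_pos not_less_iff_gr_or_eq)
qed

lemma mv_add: "mv n (\<lambda>i j. X i j + Y i j) v = (\<lambda>i. mv n X v i + mv n Y v i)"
  by (simp add: mv_def distrib_right sum.distrib)

lemma mv_scale: "mv n (\<lambda>i j. c * X i j) v = (\<lambda>i. c * mv n X v i)"
  by (simp add: mv_def sum_distrib_left mult.assoc)

lemma mv_sum: "mv n (\<lambda>i j. \<Sum>s\<in>S. F s i j) v = (\<lambda>i. \<Sum>s\<in>S. mv n (F s) v i)"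
proof
  fix i
  have "(\<Sum>j<n. (\<Sum>s\<in>S. F s i j) * v j) = (\<Sum>j<n. \<Sum>s\<in>S. F s i j * v j)"
    by (simp add: sum_distrib_right)
  also have "\<dots> = (\<Sum>s\<in>S. \<Sum>j<n. F s i j * v j)" by (rule sum.swap)
  finally show "mv n (\<lambda>i j. \<Sum>s\<in>S. F s i j) v i = (\<Sum>s\<in>S. mv n (F s) v i)" by (simp add: mv_def)
qed

lemma mv_mm: "mv n (mm n X Y) v = mv n X (mv n Y v)"
proof
  fix i
  have "(\<Sum>j<n. (\<Sum>k<n. X i k * Y k j) * v j) = (\<Sum>j<n. \<Sum>k<n. X i k * (Y k j * v j))"
    by (simp add: sum_distrib_right mult.assoc)
  also have "\<dots> = (\<Sum>k<n. \<Sum>j<n. X i k * (Y k j * v j))" by (rule sum.swap)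
  also have "\<dots> = (\<Sum>k<n. X i k * (\<Sum>j<n. Y k j * v j))" by (simp add: sum_distrib_left)
  finally show "mv n (mm n X Y) v i = mv n X (mv n Y v) i" by (simp add: mv_def mm_def)
qed

lemma nb_add: "nb n X a \<Longrightarrow> nb n Y b \<Longrightarrow> nb n (\<lambda>i j. X i j + Y i j) (a + b)"
  unfolding nb_def mv_add
proof (intro allI)
  fix v assume h: "\<forall>v. l2 n (mv n X v) \<le> a * l2 n v" "\<forall>v. l2 n (mv n Y v) \<le> b * l2 n v"
  have "l2 n (\<lambda>i. mv n X v i + mv n Y v i) \<le> l2 n (mv n X v) + l2 n (mv n Y v)"
    using l2_add[of n "mv n X v" "mv n Y v"] by simp
  also have "\<dots> \<le> a * l2 n v + b * l2 n v" using h by (intro add_mono) auto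
  finally show "l2 n (\<lambda>i. mv n X v i + mv n Y v i) \<le> (a + b) * l2 n v" by (simp add: distrib_right)
qed

lemma nb_scale: "nb n X a \<Longrightarrow> nb n (\<lambda>i j. c * X i j) (cmod c * a)"
  unfolding nb_def mv_scale l2_scale by (simp add: mult.assoc mult_left_mono)

lemma nb_diff: "nb n X a \<Longrightarrow> nb n Y b \<Longrightarrow> nb n (\<lambda>i j. X i j - Y i j) (a + b)"
  using nb_add[of n X a "\<lambda>i j. (-1) * Y i j" b] nb_scale[of n Y b "-1"] by simp

lemma nb_sum: "finite S \<Longrightarrow> (\<And>s. s \<in> S \<Longrightarrow> nb n (F s) (b s)) \<Longrightarrow> nb n (\<lambda>i j. \<Sum>s\<in>S. F s i j) (\<Sum>s\<in>S. b s)"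
  unfolding nb_def mv_sum
proof (intro allI)
  fix v assume fin: "finite S" and h: "\<And>s. s \<in> S \<Longrightarrow> \<forall>v. l2 n (mv n (F s) v) \<le> b s * l2 n v"
  have "l2 n (\<lambda>i. \<Sum>s\<in>S. mv n (F s) v i) \<le> (\<Sum>s\<in>S. l2 n (mv n (F s) v))" by (rule l2_sum[OF fin])
  also have "\<dots> \<le> (\<Sum>s\<in>S. b s * l2 n v)" by (rule sum_mono) (use h in auto)
  finally show "l2 n (\<lambda>i. \<Sum>s\<in>S. mv n (F s) v i) \<le> sum b S * l2 n v" by (simp add: sum_distrib_right)
qed

lemma nb_mm: "nb n X a \<Longrightarrow> nb n Y b \<Longrightarrow> 0 \<le> a \<Longrightarrow> nb n (mm n X Y) (a * b)"
  unfolding nb_def mv_mm by (metis mult.assoc mult_left_mono order_trans)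

lemma nb_zero: "nb n (\<lambda>i j. 0) 0" by (simp add: nb_def mv_def l2_zero)

lemma nb_id: "nb n (\<lambda>i j. if i = j then 1 else 0) 1"
proof -
  have "mv n (\<lambda>i j. if i = j then 1 else 0) v i = v i" if "i < n" for v i
  proof -
    have "(\<Sum>j<n. (if i = j then 1 else 0) * v j) = (\<Sum>j<n. if i = j then v i else 0)" by (rule sum.cong) auto
    thus ?thesis using that by (simp add: mv_def)
  qed
  hence "l2 n (mv n (\<lambda>i j. if i = j then 1 else 0) v) = l2 n v" for v by (intro l2_cong) simp
  thus ?thesis unfolding nb_def by simp
qed

lemma nb_entry: "nb n X b \<Longrightarrow> i < n \<Longrightarrow> j < n \<Longrightarrow> cmod (X i j) \<le> b"
proof -
  assume h: "nb n X b" "i < n" "j < n"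
  let ?e = "\<lambda>k. if k = j then 1 else (0::complex)"
  have "(\<Sum>k<n. X i k * ?e k) = (\<Sum>k<n. if k = j then X i j else 0)" by (rule sum.cong) auto
  hence "mv n X ?e i = X i j" using h by (simp add: mv_def)
  moreover have "(\<Sum>k<n. (cmod (?e k))\<^sup>2) = (\<Sum>k<n. if k = j then 1 else 0)" by (rule sum.cong) auto
  hence "l2 n ?e = 1" using h by (simp add: l2_def)
  moreover have "l2 n (mv n X ?e) \<le> b * l2 n ?e" using h(1) unfolding nb_def by blast
  moreover have "cmod (mv n X ?e i) \<le> l2 n (mv n X ?e)" using h(2) by (rule l2_ge_entry)
  ultimately show ?thesis by simp
qed

lemma nb_frob: "nb n X (sqrt (\<Sum>i<n. \<Sum>j<n. (cmod (X i j))\<^sup>2))"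
  unfolding nb_def
proof
  fix v
  have "(cmod (mv n X v i))\<^sup>2 \<le> (\<Sum>j<n. (cmod (X i j))\<^sup>2) * (\<Sum>j<n. (cmod (v j))\<^sup>2)" for i
  proof -
    have "cmod (mv n X v i) \<le> (\<Sum>j<n. \<bar>cmod (X i j)\<bar> * \<bar>cmod (v j)\<bar>)"
      unfolding mv_def by (rule order_trans[OF norm_sum]) (simp add: norm_mult)
    also have "\<dots> \<le> L2_set (\<lambda>j. cmod (X i j)) {..<n} * L2_set (\<lambda>j. cmod (v j)) {..<n}"
      by (rule L2_set_mult_ineq)
    finally have "(cmod (mv n X v i))\<^sup>2 \<le> (L2_set (\<lambda>j. cmod (X i j)) {..<n} * L2_set (\<lambda>j. cmod (v j)) {..<n})\<^sup>2"
      by (simp add: power_mono)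
    thus ?thesis by (simp add: power_mult_distrib L2_set_def sum_nonneg)
  qed
  hence "(\<Sum>i<n. (cmod (mv n X v i))\<^sup>2) \<le> (\<Sum>i<n. (\<Sum>j<n. (cmod (X i j))\<^sup>2) * (\<Sum>j<n. (cmod (v j))\<^sup>2))"
    by (rule sum_mono)
  also have "\<dots> = (\<Sum>i<n. \<Sum>j<n. (cmod (X i j))\<^sup>2) * (\<Sum>j<n. (cmod (v j))\<^sup>2)"
    by (simp add: sum_distrib_right)
  finally have "sqrt (\<Sum>i<n. (cmod (mv n X v i))\<^sup>2) \<le> sqrt ((\<Sum>i<n. \<Sum>j<n. (cmod (X i j))\<^sup>2) * (\<Sum>j<n. (cmod (v j))\<^sup>2))"
    by (rule real_sqrt_le_mono)
  thus "l2 n (mv n X v) \<le> sqrt (\<Sum>i<n. \<Sum>j<n. (cmod (X i j))\<^sup>2) * l2 n v"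
    unfolding l2_def real_sqrt_mult .
qed

lemma nb_limit:
  assumes lim: "\<And>i j. i < n \<Longrightarrow> j < n \<Longrightarrow> (\<lambda>L. Z L i j) \<longlonglongrightarrow> W i j"
    and ev: "\<And>L. L \<ge> L0 \<Longrightarrow> nb n (Z L) b"
  shows "nb n W b"
  unfolding nb_def
proof
  fix v
  have "(\<lambda>L. mv n (Z L) v i) \<longlonglongrightarrow> mv n W v i" if "i < n" for i
    unfolding mv_def using that lim by (intro tendsto_sum tendsto_mult tendsto_const) auto
  hence "(\<lambda>L. l2 n (mv n (Z L) v)) \<longlonglongrightarrow> l2 n (mv n W v)"
    unfolding l2_def by (intro tendsto_real_sqrt tendsto_sum tendsto_power tendsto_norm) auto
  moreover have "\<forall>\<^sub>F L in sequentially. l2 n (mv n (Z L) v) \<le> b * l2 n v"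
    using ev unfolding nb_def eventually_sequentially by blast
  ultimately show "l2 n (mv n W v) \<le> b * l2 n v" by (rule tendsto_upperbound) simp
qed



primrec mp :: "nat \<Rightarrow> (nat \<Rightarrow> nat \<Rightarrow> complex) \<Rightarrow> nat \<Rightarrow> nat \<Rightarrow> nat \<Rightarrow> complex" where
  "mp n X 0 = (\<lambda>i j. if i = j then 1 else 0)"
| "mp n X (Suc m) = mm n (mp n X m) X"

definition se :: "nat \<Rightarrow> (nat \<Rightarrow> nat \<Rightarrow> complex) \<Rightarrow> nat \<Rightarrow> nat \<Rightarrow> nat \<Rightarrow> complex" where
  "se n X L = (\<lambda>i j. \<Sum>m<L. mp n X m i j / of_nat (fact m))"

lemma exp_series_real: "(\<lambda>m. r ^ m / fact m) sums exp (r::real)"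
  using exp_converges[of r] by (simp add: divide_inverse mult.commute)

lemma exp_partial_le: "0 \<le> (r::real) \<Longrightarrow> (\<Sum>m<L. r ^ m / fact m) \<le> exp r"
  using exp_series_real[of r] sum_le_suminf[of "\<lambda>m. r ^ m / fact m" "{..<L}"]
  by (simp add: sums_iff)

lemma nb_mp: "nb n X r \<Longrightarrow> 0 \<le> r \<Longrightarrow> nb n (mp n X m) (r ^ m)"
proof (induction m)
  case 0 thus ?case using nb_id by simp
next
  case (Suc m)
  hence "nb n (mm n (mp n X m) X) (r ^ m * r)" by (intro nb_mm) auto
  thus ?case by (simp add: mult.commute)
qed

lemma mm_diff_left: "mm n (\<lambda>i j. A i j - B i j) C = (\<lambda>i j. mm n A C i j - mm n B C i j)"
  by (simp add: mm_def left_diff_distrib sum_subtractf)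

lemma mm_diff_right: "mm n C (\<lambda>i j. A i j - B i j) = (\<lambda>i j. mm n C A i j - mm n C B i j)"
  by (simp add: mm_def right_diff_distrib sum_subtractf)

lemma nb_mp_diff:
  assumes X: "nb n X r" and Y: "nb n Y r" and r: "0 \<le> r"
    and D: "nb n (\<lambda>i j. X i j - Y i j) a" and a: "0 \<le> a"
  shows "nb n (\<lambda>i j. mp n X m i j - mp n Y m i j) (real m * r ^ (m - 1) * a)"
proof (induction m)
  case 0 thus ?case using nb_zero by simp
next
  case (Suc m)
  have eq: "(\<lambda>i j. mp n X (Suc m) i j - mp n Y (Suc m) i j) =
     (\<lambda>i j. mm n (\<lambda>i j. mp n X m i j - mp n Y m i j) X i j + mm n (mp n Y m) (\<lambda>i j. X i j - Y i j) i j)"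
    by (simp add: mm_diff_left mm_diff_right)
  have "nb n (mm n (\<lambda>i j. mp n X m i j - mp n Y m i j) X) (real m * r ^ (m - 1) * a * r)"
    using Suc X r a by (intro nb_mm) auto
  moreover have "nb n (mm n (mp n Y m) (\<lambda>i j. X i j - Y i j)) (r ^ m * a)"
    using nb_mp[OF Y r] D r by (intro nb_mm) auto
  ultimately have "nb n (\<lambda>i j. mp n X (Suc m) i j - mp n Y (Suc m) i j) (real m * r ^ (m - 1) * a * r + r ^ m * a)"
    unfolding eq by (rule nb_add)
  moreover have "real m * r ^ (m - 1) * a * r + r ^ m * a = real (Suc m) * r ^ (Suc m - 1) * a"
  proof (cases m)
    case 0 thus ?thesis by simp
  next
    case (Suc k) thus ?thesis by (simp add: algebra_simps)
  qed
  ultimately show ?case by simp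
qed

lemma sum_deriv_exp: "(\<Sum>m<Suc L. real m * r ^ (m - 1) / fact m) = (\<Sum>m<L. r ^ m / fact m)"
proof (induction L)
  case 0 thus ?case by simp
next
  case (Suc L)
  have f: "(fact (Suc L)::real) = real (Suc L) * fact L" by (simp only: fact_Suc of_nat_mult)
  have "real (Suc L) * r ^ L / fact (Suc L) = (real (Suc L) * r ^ L) / (real (Suc L) * fact L)"
    by (simp only: f)
  also have "\<dots> = r ^ L / fact L" by (rule mult_divide_mult_cancel_left) simp
  finally have "real (Suc L) * r ^ L / fact (Suc L) = r ^ L / fact L" .
  thus ?case using Suc by simp
qed

lemma sum_deriv_exp_le: "0 \<le> (r::real) \<Longrightarrow> (\<Sum>m<L. real m * r ^ (m - 1) / fact m) \<le> exp r"
proof -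
  assume r: "0 \<le> r"
  have "(\<Sum>m<L. real m * r ^ (m - 1) / fact m) \<le> (\<Sum>m<Suc L. real m * r ^ (m - 1) / fact m)"
    by (simp add: r)
  also have "\<dots> = (\<Sum>m<L. r ^ m / fact m)" by (rule sum_deriv_exp)
  also have "\<dots> \<le> exp r" using r by (rule exp_partial_le)
  finally show ?thesis .
qed

lemma cmod_inv_fact: "cmod (complex_of_real (1 / fact m)) = 1 / fact m"
  by (subst norm_of_real) simp

lemma nb_se_diff:
  assumes X: "nb n X r" and Y: "nb n Y r" and r: "0 \<le> r"
    and D: "nb n (\<lambda>i j. X i j - Y i j) a" and a: "0 \<le> a"
  shows "nb n (\<lambda>i j. se n X L i j - se n Y L i j) (exp r * a)"
proof -
  have eq: "(\<lambda>i j. se n X L i j - se n Y L i j) =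
      (\<lambda>i j. \<Sum>m<L. complex_of_real (1 / fact m) * (mp n X m i j - mp n Y m i j))"
    by (simp add: se_def sum_subtractf diff_divide_distrib)
  have N: "nb n (\<lambda>i j. \<Sum>m<L. complex_of_real (1 / fact m) * (mp n X m i j - mp n Y m i j))
         (\<Sum>m<L. cmod (complex_of_real (1 / fact m)) * (real m * r ^ (m - 1) * a))"
    by (intro nb_sum nb_scale nb_mp_diff[OF X Y r D a]) auto
  have E: "(\<Sum>m<L. cmod (complex_of_real (1 / fact m)) * (real m * r ^ (m - 1) * a)) =
      (\<Sum>m<L. real m * r ^ (m - 1) / fact m) * a"
    unfolding cmod_inv_fact by (simp add: sum_distrib_right)
  have B: "(\<Sum>m<L. real m * r ^ (m - 1) / fact m) * a \<le> exp r * a"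
    using sum_deriv_exp_le[OF r] a by (rule mult_right_mono)
  show ?thesis unfolding eq by (rule nb_mono[OF N]) (simp only: E B)
qed

lemma nb_tail:
  assumes X: "nb n X r" and Y: "nb n Y r" and r: "0 \<le> r" and KL: "K \<le> L"
  shows "nb n (\<lambda>i j. (se n X L i j - se n Y L i j) - (se n X K i j - se n Y K i j))
           (2 * (exp r - (\<Sum>m<K. r ^ m / fact m)))"
proof -
  have split: "{..<L} = {..<K} \<union> {K..<L}" using KL by auto
  have U: "sum g ({..<K} \<union> {K..<L}) = sum g {..<K} + sum g {K..<L}" for g :: "nat \<Rightarrow> 'b::comm_monoid_add"
    by (rule sum.union_disjoint) auto
  have eq: "(\<lambda>i j. (se n X L i j - se n Y L i j) - (se n X K i j - se n Y K i j)) =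
      (\<lambda>i j. \<Sum>m\<in>{K..<L}. complex_of_real (1 / fact m) * (mp n X m i j - mp n Y m i j))"
    unfolding se_def split U by (simp add: sum_subtractf diff_divide_distrib)
  have N: "nb n (\<lambda>i j. \<Sum>m\<in>{K..<L}. complex_of_real (1 / fact m) * (mp n X m i j - mp n Y m i j))
         (\<Sum>m\<in>{K..<L}. cmod (complex_of_real (1 / fact m)) * (r ^ m + r ^ m))"
    by (intro nb_sum nb_scale nb_diff nb_mp X Y r) auto
  have E: "(\<Sum>m\<in>{K..<L}. cmod (complex_of_real (1 / fact m)) * (r ^ m + r ^ m)) =
      2 * ((\<Sum>m<L. r ^ m / fact m) - (\<Sum>m<K. r ^ m / fact m))"
    unfolding split U cmod_inv_fact by (simp add: sum_distrib_left)
  have B: "(\<Sum>m<L. r ^ m / fact m) \<le> exp r" using r by (rule exp_partial_le)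
  have B2: "2 * ((\<Sum>m<L. r ^ m / fact m) - (\<Sum>m<K. r ^ m / fact m)) \<le> 2 * (exp r - (\<Sum>m<K. r ^ m / fact m))"
    using B by simp
  show ?thesis unfolding eq by (rule nb_mono[OF N]) (subst E, rule B2)
qed

lemma summable_mp:
  assumes X: "nb n X r" and r: "0 \<le> r" and ij: "i < n" "j < n"
  shows "summable (\<lambda>m. mp n X m i j / of_nat (fact m))"
proof (rule summable_comparison_test[where g = "\<lambda>m. r ^ m / fact m"])
  show "summable (\<lambda>m. r ^ m / fact m)" using exp_series_real[of r] by (simp add: sums_iff)
  show "\<exists>N. \<forall>m\<ge>N. norm (mp n X m i j / of_nat (fact m)) \<le> r ^ m / fact m"
  proof (intro exI allI impI)
    fix m
    have "cmod (mp n X m i j) \<le> r ^ m" using nb_entry[OF nb_mp[OF X r] ij] .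
    thus "norm (mp n X m i j / of_nat (fact m)) \<le> r ^ m / fact m"
      by (simp add: norm_divide divide_right_mono)
  qed
qed

lemma se_lim:
  assumes X: "nb n X r" and r: "0 \<le> r" and ij: "i < n" "j < n"
  shows "(\<lambda>L. se n X L i j) \<longlonglongrightarrow> (\<Sum>m. mp n X m i j / of_nat (fact m))"
  unfolding se_def using summable_LIMSEQ[OF summable_mp[OF assms]] .



definition mf :: "complex mat \<Rightarrow> nat \<Rightarrow> nat \<Rightarrow> complex" where
  "mf X = (\<lambda>i j. X $$ (i, j))"

lemma pow_entry:
  assumes X: "X \<in> carrier_mat n n"
  shows "i < n \<Longrightarrow> j < n \<Longrightarrow> (X ^\<^sub>m m) $$ (i, j) = mp n (mf X) m i j"
proof (induction m arbitrary: i j)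
  case 0 thus ?case using X by auto
next
  case (Suc m)
  have "(X ^\<^sub>m Suc m) $$ (i, j) = row (X ^\<^sub>m m) i \<bullet> col X j"
    using Suc.prems X by simp
  also have "\<dots> = (\<Sum>k<n. (X ^\<^sub>m m) $$ (i, k) * X $$ (k, j))"
    using Suc.prems X by (simp add: scalar_prod_def lessThan_atLeast0)
  also have "\<dots> = (\<Sum>k<n. mp n (mf X) m i k * mf X k j)"
    using Suc by (intro sum.cong) (auto simp: mf_def)
  finally show ?case by (simp add: mm_def)
qed

lemma mat_exp_entry:
  assumes X: "X \<in> carrier_mat n n" and ij: "i < n" "j < n"
  shows "mat_exp X $$ (i, j) = (\<Sum>m. mp n (mf X) m i j / of_nat (fact m))"
  using X ij by (simp add: mat_exp_def pow_entry)

lemma mult_vec_entry: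
  assumes E: "E \<in> carrier_mat n n" and v: "v \<in> carrier_vec n" and i: "i < n"
  shows "(E *\<^sub>v v) $ i = mv n (mf E) (\<lambda>j. v $ j) i"
  using E v i by (simp add: mult_mat_vec_def scalar_prod_def mv_def mf_def lessThan_atLeast0 mult.commute)

lemma vec_norm2_l2: "v \<in> carrier_vec n \<Longrightarrow> vec_norm2 v = l2 n (\<lambda>j. v $ j)"
  by (simp add: vec_norm2_def l2_def)

lemma spec_norm_le:
  assumes E: "E \<in> carrier_mat n n" and nbE: "nb n (mf E) b" and b: "0 \<le> b"
  shows "spec_norm E \<le> b"
  unfolding spec_norm_def
proof (rule cSup_least)
  show "{vec_norm2 (E *\<^sub>v v) |v. v \<in> carrier_vec (dim_col E) \<and> vec_norm2 v \<le> 1} \<noteq> {}"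
  proof -
    have "vec_norm2 (E *\<^sub>v 0\<^sub>v n) \<in> {vec_norm2 (E *\<^sub>v v) |v. v \<in> carrier_vec (dim_col E) \<and> vec_norm2 v \<le> 1}"
      by (intro CollectI exI[of _ "0\<^sub>v n"]) (use E in \<open>auto simp: vec_norm2_def\<close>)
    thus ?thesis by blast
  qed
next
  fix x assume "x \<in> {vec_norm2 (E *\<^sub>v v) |v. v \<in> carrier_vec (dim_col E) \<and> vec_norm2 v \<le> 1}"
  then obtain v where x: "x = vec_norm2 (E *\<^sub>v v)" and v: "v \<in> carrier_vec n" and v1: "vec_norm2 v \<le> 1"
    using E by auto
  have Ev: "E *\<^sub>v v \<in> carrier_vec n" using E v by auto
  have "x = l2 n (\<lambda>i. (E *\<^sub>v v) $ i)" using x vec_norm2_l2[OF Ev] by simp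
  also have "\<dots> = l2 n (mv n (mf E) (\<lambda>j. v $ j))"
    by (rule l2_cong) (simp add: mult_vec_entry[OF E v])
  also have "\<dots> \<le> b * l2 n (\<lambda>j. v $ j)" using nbE unfolding nb_def by blast
  also have "\<dots> \<le> b * 1" using v1 vec_norm2_l2[OF v] b by (intro mult_left_mono) auto
  finally show "x \<le> b" by simp
qed

lemma rank_rows:
  assumes "finite S" "S \<subseteq> {..<n}"
  shows "\<And>R. R \<in> carrier_mat n n \<Longrightarrow> (\<And>i j. i < n \<Longrightarrow> j < n \<Longrightarrow> i \<notin> S \<Longrightarrow> R $$ (i, j) = 0)
     \<Longrightarrow> vec_space.rank n R \<le> card S"
  using assms
proof (induction S rule: finite_induct)
  case empty
  hence "R = 0\<^sub>m n n" by (intro eq_matI) auto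
  thus ?case using vec_space.rank_0I by simp
next
  case (insert x S)
  define R1 where "R1 = mat n n (\<lambda>(i, j). if i = x then R $$ (i, j) else 0)"
  define R2 where "R2 = mat n n (\<lambda>(i, j). if i = x then 0 else R $$ (i, j))"
  have R1c: "R1 \<in> carrier_mat n n" and R2c: "R2 \<in> carrier_mat n n" by (auto simp: R1_def R2_def)
  have "R = R1 + R2" using insert.prems(1) by (intro eq_matI) (auto simp: R1_def R2_def)
  hence "vec_space.rank n R \<le> vec_space.rank n R1 + vec_space.rank n R2"
    using vec_space.rank_subadditive[OF R1c R2c] by simp
  moreover have "vec_space.rank n R1 \<le> 1"
    by (rule vec_space.rank_le_1_product_entries[OF R1c, of "\<lambda>r. if r = x then 1 else 0" "\<lambda>c. R $$ (x, c)"])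
      (auto simp: R1_def)
  moreover have "vec_space.rank n R2 \<le> card S"
    using insert.prems insert.IH[OF R2c] by (auto simp: R2_def)
  ultimately show ?case using insert.hyps by simp
qed



definition ee :: "int \<Rightarrow> real \<Rightarrow> complex" where
  "ee k t = exp (\<i> * of_int k * of_real t)"

lemma ee_mult: "ee j t * ee k t = ee (j + k) t"
  by (simp add: ee_def exp_add[symmetric] algebra_simps)

lemma ee_cnj: "cnj (ee k t) = ee (- k) t"
  by (simp add: ee_def exp_cnj)

lemma cont_ee [continuous_intros]: "continuous_on S (ee k)"
  unfolding ee_def by (intro continuous_intros)

lemma ee_pi: "ee k pi = ee k (- pi)"
proof -
  have a: "\<i> * of_int k * of_real pi = (2 * of_int k * of_real pi) * \<i> + \<i> * of_int k * of_real (-pi)"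
    by (simp add: algebra_simps)
  have "ee k pi = exp ((2 * of_int k * of_real pi) * \<i>) * ee k (- pi)"
    unfolding ee_def by (subst a, subst exp_add) (rule refl)
  moreover have "exp ((2 * of_int k * of_real pi) * \<i>) = 1"
    using exp_integer_2pi[of "of_int k"] by simp
  ultimately show ?thesis by simp
qed

lemma ee_integral: "(ee k has_integral (if k = 0 then 2 * pi else 0)) {-pi..pi}"
proof (cases "k = 0")
  case True
  have "ee k = (\<lambda>t. 1)" using True by (auto simp: ee_def)
  moreover note has_integral_const_real[of "1::complex" "-pi" pi]
  ultimately show ?thesis using True by (simp add: scaleR_conv_of_real)
next
  case False
  define F where "F = (\<lambda>z. exp (\<i> * of_int k * z) / (\<i> * of_int k))"
  have d: "(F has_field_derivative exp (\<i> * of_int k * z)) (at z)" for z :: complex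
    unfolding F_def using False by (auto intro!: derivative_eq_intros simp: field_simps)
  have "(ee k has_integral (F (of_real pi) - F (of_real (- pi)))) {-pi..pi}"
  proof (rule fundamental_theorem_of_calculus)
    show "- pi \<le> pi" by simp
    fix x assume "x \<in> {-pi..pi}"
    show "((\<lambda>x. F (of_real x)) has_vector_derivative ee k x) (at x within {-pi..pi})"
      unfolding ee_def by (rule has_vector_derivative_real_field[OF d])
  qed
  moreover have "F (of_real pi) = F (of_real (- pi))"
    using ee_pi[of k] by (simp add: F_def ee_def)
  ultimately show ?thesis using False by simp
qed

lemma trig_inner:
  "((\<lambda>t. cnj (\<Sum>j<n. p j * ee (int j) t) * (\<Sum>k<n. q k * ee (int k) t)) has_integral
     (2 * pi * (\<Sum>j<n. cnj (p j) * q j))) {-pi..pi}"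
proof -
  have eq: "cnj (\<Sum>j<n. p j * ee (int j) t) * (\<Sum>k<n. q k * ee (int k) t) =
      (\<Sum>j<n. \<Sum>k<n. (cnj (p j) * q k) * ee (int k - int j) t)" for t
  proof -
    have "cnj (\<Sum>j<n. p j * ee (int j) t) * (\<Sum>k<n. q k * ee (int k) t) =
        (\<Sum>j<n. \<Sum>k<n. (cnj (p j) * q k) * (cnj (ee (int j) t) * ee (int k) t))"
      by (simp add: sum_distrib_left sum_distrib_right mult_ac)
    also have "\<dots> = (\<Sum>j<n. \<Sum>k<n. (cnj (p j) * q k) * ee (int k - int j) t)"
      by (simp add: ee_cnj ee_mult)
    finally show ?thesis .
  qed
  have "((\<lambda>t. \<Sum>j<n. \<Sum>k<n. (cnj (p j) * q k) * ee (int k - int j) t) has_integral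
      (\<Sum>j<n. \<Sum>k<n. (cnj (p j) * q k) * (if int k - int j = 0 then 2 * pi else 0))) {-pi..pi}"
    by (intro has_integral_sum has_integral_mult_right ee_integral) auto
  moreover have "(\<Sum>j<n. \<Sum>k<n. (cnj (p j) * q k) * (if int k - int j = 0 then 2 * pi else 0)) =
      (\<Sum>j<n. \<Sum>k<n. if k = j then 2 * pi * (cnj (p j) * q j) else 0)"
    by (intro sum.cong) auto
  moreover have "\<dots> = 2 * pi * (\<Sum>j<n. cnj (p j) * q j)"
    by (simp add: sum_distrib_left)
  ultimately show ?thesis unfolding eq by simp
qed

lemma trig_norm2:
  "((\<lambda>t. (cmod (\<Sum>j<n. p j * ee (int j) t))\<^sup>2) has_integral
     (2 * pi * (\<Sum>j<n. (cmod (p j))\<^sup>2))) {-pi..pi}"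
proof -
  have H: "((Re \<circ> (\<lambda>t. cnj (\<Sum>j<n. p j * ee (int j) t) * (\<Sum>k<n. p k * ee (int k) t))) has_integral
      Re (2 * pi * (\<Sum>j<n. cnj (p j) * p j))) {-pi..pi}"
    by (rule has_integral_linear[OF trig_inner bounded_linear_Re])
  have R: "Re (cnj z * z) = (cmod z)\<^sup>2" for z
    by (simp only: cmod_power2) (simp add: power2_eq_square)
  have F: "(Re \<circ> (\<lambda>t. cnj (\<Sum>j<n. p j * ee (int j) t) * (\<Sum>k<n. p k * ee (int k) t))) =
      (\<lambda>t. (cmod (\<Sum>j<n. p j * ee (int j) t))\<^sup>2)"
    by (rule ext) (simp only: o_def R)
  have "Re (\<Sum>j<n. cnj (p j) * p j) = (\<Sum>j<n. (cmod (p j))\<^sup>2)"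
    unfolding Re_sum by (rule sum.cong) (simp_all only: R)
  moreover have "Re (2 * complex_of_real pi * S) = 2 * pi * Re S" for S by simp
  ultimately have V: "Re (2 * pi * (\<Sum>j<n. cnj (p j) * p j)) = 2 * pi * (\<Sum>j<n. (cmod (p j))\<^sup>2)" by simp
  show ?thesis using H unfolding F V .
qed



lemma fc_has_integral:
  assumes g: "continuous_on {-pi..pi} g"
  shows "((\<lambda>t. g t * ee m t) has_integral (2 * pi * fourier_coeff g (- m))) {-pi..pi}"
proof -
  have int: "(\<lambda>t. g t * ee m t) integrable_on {-pi..pi}"
    by (intro integrable_continuous_interval continuous_intros g)
  have "(\<lambda>t. g t * exp (- \<i> * of_int (- m) * of_real t)) = (\<lambda>t. g t * ee m t)"
    by (simp add: ee_def)
  hence "fourier_coeff g (- m) = integral {-pi..pi} (\<lambda>t. g t * ee m t) / (2 * pi)"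
    by (simp add: fourier_coeff_def)
  hence "2 * pi * fourier_coeff g (- m) = integral {-pi..pi} (\<lambda>t. g t * ee m t)"
    by simp
  thus ?thesis using int by (simp add: has_integral_integrable_integral)
qed

lemma fc_bilinear:
  assumes g: "continuous_on {-pi..pi} g"
  shows "((\<lambda>t. g t * (cnj (\<Sum>j<n. w j * ee (int j) t) * (\<Sum>k<n. v k * ee (int k) t))) has_integral
     (2 * pi * (\<Sum>j<n. cnj (w j) * mv n (\<lambda>j k. fourier_coeff g (int j - int k)) v j))) {-pi..pi}"
proof -
  have eq: "g t * (cnj (\<Sum>j<n. w j * ee (int j) t) * (\<Sum>k<n. v k * ee (int k) t)) =
      (\<Sum>j<n. \<Sum>k<n. (cnj (w j) * v k) * (g t * ee (int k - int j) t))" for t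
  proof -
    have "g t * (cnj (\<Sum>j<n. w j * ee (int j) t) * (\<Sum>k<n. v k * ee (int k) t)) =
        (\<Sum>j<n. \<Sum>k<n. (cnj (w j) * v k) * (g t * (cnj (ee (int j) t) * ee (int k) t)))"
      by (simp add: sum_distrib_left sum_distrib_right mult_ac)
    also have "\<dots> = (\<Sum>j<n. \<Sum>k<n. (cnj (w j) * v k) * (g t * ee (int k - int j) t))"
      by (simp add: ee_cnj ee_mult)
    finally show ?thesis .
  qed
  have "((\<lambda>t. \<Sum>j<n. \<Sum>k<n. (cnj (w j) * v k) * (g t * ee (int k - int j) t)) has_integral
      (\<Sum>j<n. \<Sum>k<n. (cnj (w j) * v k) * (2 * pi * fourier_coeff g (- (int k - int j))))) {-pi..pi}"
    by (intro has_integral_sum has_integral_mult_right fc_has_integral g) auto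
  moreover have "(\<Sum>j<n. \<Sum>k<n. (cnj (w j) * v k) * (2 * pi * fourier_coeff g (- (int k - int j)))) =
      2 * pi * (\<Sum>j<n. cnj (w j) * mv n (\<lambda>j k. fourier_coeff g (int j - int k)) v j)"
    by (simp add: mv_def sum_distrib_left mult_ac)
  ultimately show ?thesis unfolding eq by simp
qed

lemma amgm: "0 \<le> a \<Longrightarrow> 0 \<le> b \<Longrightarrow> 0 < s \<Longrightarrow> a * b \<le> (s * a\<^sup>2 + (1 / s) * b\<^sup>2) / 2" for a b s :: real
proof -
  assume s: "0 < s"
  have "0 \<le> (s * a - b)\<^sup>2 / s" using s by simp
  also have "(s * a - b)\<^sup>2 / s = s * a\<^sup>2 + (1 / s) * b\<^sup>2 - 2 * (a * b)"
    using s by (simp add: field_simps power2_eq_square)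
  finally show ?thesis by simp
qed

lemma l2_sq: "(l2 n u)\<^sup>2 = (\<Sum>j<n. (cmod (u j))\<^sup>2)"
  unfolding l2_def by (simp add: sum_nonneg)

lemma toeplitz_key:
  assumes g: "continuous_on {-pi..pi} g" and G: "\<forall>t\<in>{-pi..pi}. cmod (g t) \<le> G"
    and s: "0 < s" and u: "u = mv n (\<lambda>j k. fourier_coeff g (int j - int k)) v"
  shows "(l2 n u)\<^sup>2 \<le> G / 2 * (s * (l2 n u)\<^sup>2 + (1 / s) * (l2 n v)\<^sup>2)"
proof -
  define W where "W = (\<lambda>t. \<Sum>j<n. u j * ee (int j) t)"
  define V where "V = (\<lambda>t. \<Sum>k<n. v k * ee (int k) t)"
  define I where "I = integral {-pi..pi} (\<lambda>t. g t * (cnj (W t) * V t))"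
  have hI: "((\<lambda>t. g t * (cnj (W t) * V t)) has_integral (2 * pi * (\<Sum>j<n. cnj (u j) * u j))) {-pi..pi}"
    using fc_bilinear[OF g, where n=n and w=u and v=v] unfolding W_def V_def u by simp
  hence I: "I = 2 * pi * (\<Sum>j<n. cnj (u j) * u j)" unfolding I_def by (rule integral_unique)
  have S: "(\<Sum>j<n. cnj (u j) * u j) = of_real ((l2 n u)\<^sup>2)"
    unfolding l2_sq of_real_sum complex_norm_square by (rule sum.cong[OF refl]) (rule mult.commute)
  have hB: "((\<lambda>t. G / 2 * (s * (cmod (W t))\<^sup>2 + (1 / s) * (cmod (V t))\<^sup>2)) has_integral
      (G / 2 * (s * (2 * pi * (l2 n u)\<^sup>2) + (1 / s) * (2 * pi * (l2 n v)\<^sup>2)))) {-pi..pi}"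
    unfolding W_def V_def l2_sq
    by (intro has_integral_mult_right has_integral_add trig_norm2)
  have "cmod I \<le> integral {-pi..pi} (\<lambda>t. G / 2 * (s * (cmod (W t))\<^sup>2 + (1 / s) * (cmod (V t))\<^sup>2))"
    unfolding I_def
  proof (rule integral_norm_bound_integral)
    show "(\<lambda>t. g t * (cnj (W t) * V t)) integrable_on {-pi..pi}" using hI by blast
    show "(\<lambda>t. G / 2 * (s * (cmod (W t))\<^sup>2 + (1 / s) * (cmod (V t))\<^sup>2)) integrable_on {-pi..pi}"
      using hB by blast
    fix t assume t: "t \<in> {-pi..pi}"
    have "norm (g t * (cnj (W t) * V t)) = cmod (g t) * (cmod (W t) * cmod (V t))"
      by (simp add: norm_mult)
    also have "\<dots> \<le> G * (cmod (W t) * cmod (V t))"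
      using G t by (intro mult_right_mono) auto
    also have "\<dots> \<le> G * ((s * (cmod (W t))\<^sup>2 + (1 / s) * (cmod (V t))\<^sup>2) / 2)"
    proof (rule mult_left_mono)
      show "cmod (W t) * cmod (V t) \<le> (s * (cmod (W t))\<^sup>2 + (1 / s) * (cmod (V t))\<^sup>2) / 2"
        using s by (intro amgm) auto
      show "0 \<le> G" using G t norm_ge_zero[of "g t"] by (meson order_trans)
    qed
    finally show "norm (g t * (cnj (W t) * V t)) \<le> G / 2 * (s * (cmod (W t))\<^sup>2 + (1 / s) * (cmod (V t))\<^sup>2)"
      by simp
  qed
  also have "\<dots> = G / 2 * (s * (2 * pi * (l2 n u)\<^sup>2) + (1 / s) * (2 * pi * (l2 n v)\<^sup>2))"
    using hB by (rule integral_unique)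
  finally have "cmod I \<le> G / 2 * (s * (2 * pi * (l2 n u)\<^sup>2) + (1 / s) * (2 * pi * (l2 n v)\<^sup>2))" .
  moreover have "cmod I = 2 * pi * (l2 n u)\<^sup>2"
    unfolding I S by (simp only: norm_mult norm_of_real) (simp add: abs_of_nonneg)
  ultimately have "2 * pi * (l2 n u)\<^sup>2 \<le> 2 * pi * (G / 2 * (s * (l2 n u)\<^sup>2 + (1 / s) * (l2 n v)\<^sup>2))"
    by (simp add: algebra_simps)
  thus ?thesis by simp
qed

lemma toeplitz_nb:
  assumes g: "continuous_on {-pi..pi} g" and G: "\<forall>t\<in>{-pi..pi}. cmod (g t) \<le> G"
  shows "nb n (\<lambda>j k. fourier_coeff g (int j - int k)) G"
  unfolding nb_def
proof
  fix v
  have G0: "0 \<le> G" using G norm_ge_zero[of "g 0"] by (meson order_trans atLeastAtMost_iff pi_ge_zero neg_le_0_iff_le)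
  define u where "u = mv n (\<lambda>j k. fourier_coeff g (int j - int k)) v"
  note key = toeplitz_key[OF g G _ u_def]
  let ?a = "l2 n u" and ?b = "l2 n v"
  have a0: "0 \<le> ?a" and b0: "0 \<le> ?b" by (rule l2_nonneg)+
  have "?a \<le> G * ?b"
  proof (cases "?a = 0")
    case True thus ?thesis using G0 b0 by simp
  next
    case False
    hence a: "0 < ?a" using a0 by simp
    show ?thesis
    proof (cases "?b = 0")
      case True
      have "?a\<^sup>2 \<le> G / 2 * ((1 / (G + 1)) * ?a\<^sup>2 + (1 / (1 / (G + 1))) * ?b\<^sup>2)"
        using key[of "1 / (G + 1)"] G0 by simp
      hence "?a\<^sup>2 \<le> G / (2 * (G + 1)) * ?a\<^sup>2" using True by simp
      moreover have "G / (2 * (G + 1)) * ?a\<^sup>2 < ?a\<^sup>2"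
      proof -
        have "G / (2 * (G + 1)) < 1" using G0 by (simp add: field_simps)
        moreover have "0 < ?a\<^sup>2" using a by simp
        ultimately show ?thesis using mult_strict_right_mono[of "G / (2 * (G + 1))" 1 "?a\<^sup>2"] by simp
      qed
      ultimately show ?thesis by simp
    next
      case False
      hence b: "0 < ?b" using b0 by simp
      have "?a\<^sup>2 \<le> G / 2 * ((?b / ?a) * ?a\<^sup>2 + (1 / (?b / ?a)) * ?b\<^sup>2)"
        using key[of "?b / ?a"] a b by simp
      also have "\<dots> = G * (?a * ?b)" using a b by (simp add: field_simps power2_eq_square)
      finally have "?a * ?a \<le> (G * ?b) * ?a" by (simp add: power2_eq_square mult_ac)
      thus ?thesis using a by simp
    qed
  qed
  thus "l2 n (mv n (\<lambda>j k. fourier_coeff g (int j - int k)) v) \<le> G * l2 n v" by (simp add: u_def)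
qed



lemma shift_bij: "0 < n \<Longrightarrow> bij_betw (\<lambda>j. (j + s) mod n) {..<n} {..<(n::nat)}"
proof -
  assume n: "0 < n"
  have inj: "inj_on (\<lambda>j. (j + s) mod n) {..<n}"
  proof
    fix a b assume a: "a \<in> {..<n}" and b: "b \<in> {..<n}" and e: "(a + s) mod n = (b + s) mod n"
    hence "(int a + int s) mod int n = (int b + int s) mod int n"
      by (metis of_nat_add zmod_int)
    hence "(int a + int s - int s) mod int n = (int b + int s - int s) mod int n"
      by (rule mod_diff_cong) simp
    hence "int a mod int n = int b mod int n" by simp
    thus "a = b" using a b by simp
  qed
  have "(\<lambda>j. (j + s) mod n) ` {..<n} \<subseteq> {..<n}" using n by auto
  hence "(\<lambda>j. (j + s) mod n) ` {..<n} = {..<n}" using inj by (intro endo_inj_surj) auto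
  thus ?thesis using inj by (simp add: bij_betw_def)
qed

lemma sum_shift: "0 < n \<Longrightarrow> (\<Sum>j<n. F ((j + s) mod n)) = (\<Sum>j<(n::nat). F j)"
proof -
  assume n: "0 < n"
  show ?thesis using sum.reindex_bij_betw[OF shift_bij[OF n, of s], of F] by simp
qed

lemma l2_shift: "0 < n \<Longrightarrow> l2 n (\<lambda>j. z ((j + s) mod n)) = l2 n z"
  unfolding l2_def using sum_shift[where n=n and F="\<lambda>j. (cmod (z j))\<^sup>2" and s=s] by simp

lemma shift_inv: "k < n \<Longrightarrow> s < n \<Longrightarrow> ((k + s) mod n + (n - s)) mod n = (k::nat)"
proof -
  assume k: "k < n" and s: "s < n"
  have "((k + s) mod n + (n - s)) mod n = (k + s + (n - s)) mod n" by (simp add: mod_add_left_eq)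
  also have "k + s + (n - s) = k + n" using s by simp
  finally show ?thesis using k by simp
qed

lemma cav_nb:
  assumes n: "0 < n" and X: "nb n X b"
  shows "nb n (\<lambda>j k. (1 / of_nat n) * (\<Sum>s<n. X ((j + s) mod n) ((k + s) mod n))) b"
  unfolding nb_def
proof
  fix v :: "nat \<Rightarrow> complex"
  define sh where "sh s = (\<lambda>k. v ((k + (n - s)) mod n))" for s
  have row: "(\<Sum>k<n. X a ((k + s) mod n) * v k) = mv n X (sh s) a" if s: "s < n" for a s
  proof -
    have "(\<Sum>k<n. X a ((k + s) mod n) * v k) = (\<Sum>k<n. (\<lambda>k'. X a k' * sh s k') ((k + s) mod n))"
      by (rule sum.cong[OF refl]) (simp add: sh_def shift_inv[OF _ s])
    also have "\<dots> = (\<Sum>k<n. X a k * sh s k)" by (rule sum_shift[OF n])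
    finally show ?thesis by (simp add: mv_def)
  qed
  have eq: "mv n (\<lambda>j k. (1 / of_nat n) * (\<Sum>s<n. X ((j + s) mod n) ((k + s) mod n))) v =
      (\<lambda>j. (1 / of_nat n) * (\<Sum>s<n. mv n X (sh s) ((j + s) mod n)))"
  proof
    fix j
    have "mv n (\<lambda>j k. (1 / of_nat n) * (\<Sum>s<n. X ((j + s) mod n) ((k + s) mod n))) v j =
        (\<Sum>k<n. (1 / of_nat n) * (\<Sum>s<n. X ((j + s) mod n) ((k + s) mod n) * v k))"
      by (simp add: mv_def sum_distrib_right mult.assoc)
    also have "\<dots> = (1 / of_nat n) * (\<Sum>k<n. \<Sum>s<n. X ((j + s) mod n) ((k + s) mod n) * v k)"
      by (simp only: sum_distrib_left)
    also have "\<dots> = (1 / of_nat n) * (\<Sum>s<n. \<Sum>k<n. X ((j + s) mod n) ((k + s) mod n) * v k)"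
      by (subst sum.swap) (rule refl)
    also have "\<dots> = (1 / of_nat n) * (\<Sum>s<n. mv n X (sh s) ((j + s) mod n))"
      by (simp add: row)
    finally show "mv n (\<lambda>j k. (1 / of_nat n) * (\<Sum>s<n. X ((j + s) mod n) ((k + s) mod n))) v j =
        (1 / of_nat n) * (\<Sum>s<n. mv n X (sh s) ((j + s) mod n))" .
  qed
  have "l2 n (\<lambda>j. (1 / of_nat n) * (\<Sum>s<n. mv n X (sh s) ((j + s) mod n))) =
      (1 / real n) * l2 n (\<lambda>j. \<Sum>s<n. mv n X (sh s) ((j + s) mod n))"
    by (subst l2_scale) (simp add: norm_divide)
  also have "l2 n (\<lambda>j. \<Sum>s<n. mv n X (sh s) ((j + s) mod n)) \<le> (\<Sum>s<n. l2 n (\<lambda>j. mv n X (sh s) ((j + s) mod n)))"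
    by (rule l2_sum) simp
  also have "\<dots> = (\<Sum>s<n. l2 n (mv n X (sh s)))" by (simp add: l2_shift[OF n])
  also have "\<dots> \<le> (\<Sum>s<n. b * l2 n (sh s))" using X unfolding nb_def by (intro sum_mono) auto
  also have "\<dots> = (\<Sum>s<n. b * l2 n v)"
  proof -
    have "l2 n (sh s) = l2 n v" for s unfolding sh_def by (rule l2_shift[OF n])
    thus ?thesis by simp
  qed
  also have "\<dots> = real n * (b * l2 n v)" by simp
  finally have "l2 n (\<lambda>j. (1 / of_nat n) * (\<Sum>s<n. mv n X (sh s) ((j + s) mod n))) \<le> (1 / real n) * (real n * (b * l2 n v))"
    by (simp add: divide_right_mono)
  thus "l2 n (mv n (\<lambda>j k. (1 / of_nat n) * (\<Sum>s<n. X ((j + s) mod n) ((k + s) mod n))) v) \<le> b * l2 n v"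
    unfolding eq using n by simp
qed



lemma diag_sum:
  assumes d: "d < (n::nat)"
  shows "(\<Sum>t<n. a (int ((t + d) mod n) - int t)) = of_nat (n - d) * a (int d) + of_nat d * a (int d - int n)"
proof -
  have U: "{..<n} = {..<n - d} \<union> {n - d..<n}" by auto
  have "(\<Sum>t<n. a (int ((t + d) mod n) - int t)) =
      (\<Sum>t<n - d. a (int ((t + d) mod n) - int t)) + (\<Sum>t\<in>{n - d..<n}. a (int ((t + d) mod n) - int t))"
    unfolding U by (rule sum.union_disjoint) auto
  also have "(\<Sum>t<n - d. a (int ((t + d) mod n) - int t)) = (\<Sum>t<n - d. a (int d))"
  proof (rule sum.cong[OF refl])
    fix t assume "t \<in> {..<n - d}"
    hence "(t + d) mod n = t + d" by simp
    thus "a (int ((t + d) mod n) - int t) = a (int d)" by simp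
  qed
  also have "(\<Sum>t\<in>{n - d..<n}. a (int ((t + d) mod n) - int t)) = (\<Sum>t\<in>{n - d..<n}. a (int d - int n))"
  proof (rule sum.cong[OF refl])
    fix t assume t: "t \<in> {n - d..<n}"
    hence "(t + d) mod n = (t + d - n) mod n" using d by (intro le_mod_geq) auto
    also have "\<dots> = t + d - n" using t d by (intro mod_less) auto
    finally have "(t + d) mod n = t + d - n" .
    moreover have "int (t + d - n) = int t + int d - int n" using t d by auto
    ultimately show "a (int ((t + d) mod n) - int t) = a (int d - int n)" by simp
  qed
  finally show ?thesis using d by simp
qed

lemma shift_diag:
  assumes n: "0 < n" and j: "j < n" and k: "k < n"
  shows "(j + s) mod n = ((k + s) mod n + nat ((int j - int k) mod int n)) mod n"
proof -
  have "int (((k + s) mod n + nat ((int j - int k) mod int n)) mod n) =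
      ((int k + int s) mod int n + (int j - int k) mod int n) mod int n"
    using n by (simp add: zmod_int of_nat_mod)
  also have "\<dots> = (int k + int s + (int j - int k)) mod int n" by (simp add: mod_add_eq)
  also have "\<dots> = (int j + int s) mod int n" by (simp add: add.commute)
  also have "\<dots> = int ((j + s) mod n)" by (simp add: zmod_int)
  finally show ?thesis by simp
qed

lemma optcirc_avg:
  assumes n: "0 < n" and j: "j < n" and k: "k < n"
  shows "opt_circ_coeff n g (nat ((int j - int k) mod int n)) =
    (1 / of_nat n) * (\<Sum>s<n. fourier_coeff g (int ((j + s) mod n) - int ((k + s) mod n)))"
proof -
  define d where "d = nat ((int j - int k) mod int n)"
  have d: "d < n" using n unfolding d_def by (simp add: nat_less_iff)
  have "(\<Sum>s<n. fourier_coeff g (int ((j + s) mod n) - int ((k + s) mod n))) =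
      (\<Sum>s<n. (\<lambda>t. fourier_coeff g (int ((t + d) mod n) - int t)) ((k + s) mod n))"
    using shift_diag[OF n j k] unfolding d_def by simp
  also have "\<dots> = (\<Sum>t<n. fourier_coeff g (int ((t + d) mod n) - int t))"
    using sum_shift[OF n, of "\<lambda>t. fourier_coeff g (int ((t + d) mod n) - int t)" k] by (simp add: add.commute)
  also have "\<dots> = of_nat (n - d) * fourier_coeff g (int d) + of_nat d * fourier_coeff g (int d - int n)"
    by (rule diag_sum[OF d])
  finally have S: "(\<Sum>s<n. fourier_coeff g (int ((j + s) mod n) - int ((k + s) mod n))) =
      of_nat (n - d) * fourier_coeff g (int d) + of_nat d * fourier_coeff g (int d - int n)" .
  show ?thesis unfolding d_def[symmetric] S opt_circ_coeff_def using d
    by (simp add: of_nat_diff)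
qed

lemma optcirc_nb:
  assumes n: "0 < n" and T: "nb n (\<lambda>j k. fourier_coeff g (int j - int k)) b"
  shows "nb n (mf (opt_circulant n g)) b"
proof -
  have N: "nb n (\<lambda>j k. (1 / of_nat n) * (\<Sum>s<n. fourier_coeff g (int ((j + s) mod n) - int ((k + s) mod n)))) b"
    using cav_nb[OF n T] by simp
  show ?thesis
    by (rule nb_cong[OF _ N]) (simp add: mf_def opt_circulant_def optcirc_avg[OF n])
qed



definition tsum :: "(complex \<times> int) list \<Rightarrow> real \<Rightarrow> complex" where
  "tsum xs t = (\<Sum>p\<leftarrow>xs. fst p * ee (snd p) t)"

definition mulP :: "(complex \<times> int) list \<Rightarrow> (complex \<times> int) list \<Rightarrow> (complex \<times> int) list" where
  "mulP xs ys = concat (map (\<lambda>p. map (\<lambda>q. (fst p * fst q, snd p + snd q)) ys) xs)"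

lemma tsum_Nil [simp]: "tsum [] t = 0" by (simp add: tsum_def)
lemma tsum_Cons [simp]: "tsum (p # xs) t = fst p * ee (snd p) t + tsum xs t" by (simp add: tsum_def)
lemma tsum_append: "tsum (xs @ ys) t = tsum xs t + tsum ys t" by (simp add: tsum_def)

lemma tsum_scale: "tsum (map (\<lambda>p. (a * fst p, snd p)) xs) t = a * tsum xs t"
  by (induction xs) (auto simp: algebra_simps)

lemma tsum_mulP: "tsum (mulP xs ys) t = tsum xs t * tsum ys t"
proof (induction xs)
  case Nil thus ?case by (simp add: mulP_def)
next
  case (Cons p xs)
  have "tsum (map (\<lambda>q. (fst p * fst q, snd p + snd q)) ys) t = fst p * ee (snd p) t * tsum ys t"
    by (induction ys) (auto simp: algebra_simps ee_mult[symmetric])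
  thus ?case using Cons by (simp add: mulP_def tsum_append algebra_simps)
qed

lemma cont_tsum [continuous_intros]: "continuous_on S (tsum xs)"
  by (induction xs) (auto intro!: continuous_intros)

lemma fc_of_integral:
  assumes "((\<lambda>t. g t * ee (- m) t) has_integral I) {-pi..pi}"
  shows "fourier_coeff g m = I / (2 * pi)"
proof -
  have "(\<lambda>t. g t * exp (- \<i> * of_int m * of_real t)) = (\<lambda>t. g t * ee (- m) t)"
    by (simp add: ee_def)
  thus ?thesis using assms by (simp add: fourier_coeff_def integral_unique)
qed

lemma tsum_integral:
  fixes xs :: "(complex \<times> int) list"
  shows "((\<lambda>t. tsum xs t * ee (- m) t) has_integral (2 * complex_of_real pi * (\<Sum>p\<leftarrow>xs. if snd p = m then fst p else 0))) {-pi..pi}"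
proof (induction xs)
  case Nil thus ?case by simp
next
  case (Cons p xs)
  have e: "tsum (p # xs) t * ee (- m) t = fst p * ee (snd p - m) t + tsum xs t * ee (- m) t" for t
    by (simp add: algebra_simps ee_mult)
  note h1 = has_integral_mult_right[OF ee_integral[of "snd p - m"], of "fst p"]
  note h2 = has_integral_add[OF h1 Cons.IH]
  from h2 show ?case unfolding e by (rule has_integral_eq_rhs) (simp add: algebra_simps)
qed

lemma fc_tsum: "fourier_coeff (tsum xs) m = (\<Sum>p\<leftarrow>xs. if snd p = m then fst p else (0::complex))"
  using fc_of_integral[OF tsum_integral[of xs m]] by simp

lemma cos_ee: "complex_of_real (cos t) = (ee 1 t + ee (-1) t) / 2"
  unfolding ee_def cos_of_real[symmetric] cos_exp_eq by simp

lemma sin_ee: "complex_of_real (sin t) = (ee 1 t - ee (-1) t) / (2 * \<i>)"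
  unfolding ee_def sin_of_real[symmetric] sin_exp_eq by simp

lemma rpf_trig:
  fixes h :: "complex \<Rightarrow> real"
  assumes "real_polynomial_function h"
  shows "\<exists>xs. \<forall>t. complex_of_real (h (cis t)) = tsum xs t"
  using assms
proof (induction h rule: real_polynomial_function.induct)
  case (linear h)
  interpret bounded_linear h by fact
  have hz: "h z = Re z * h 1 + Im z * h \<i>" for z
  proof -
    have "z = Re z *\<^sub>R 1 + Im z *\<^sub>R \<i>" by (simp add: complex_eq_iff)
    hence "h z = h (Re z *\<^sub>R 1 + Im z *\<^sub>R \<i>)" by simp
    also have "\<dots> = Re z * h 1 + Im z * h \<i>" by (simp add: add scaleR)
    finally show ?thesis .
  qed
  define xs where "xs = [(of_real (h 1) / 2 + of_real (h \<i>) / (2 * \<i>), 1::int),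
                       (of_real (h 1) / 2 - of_real (h \<i>) / (2 * \<i>), -1)]"
  have "complex_of_real (h (cis t)) = tsum xs t" for t
  proof -
    have "complex_of_real (h (cis t)) = of_real (cos t) * of_real (h 1) + of_real (sin t) * of_real (h \<i>)"
      by (simp only: hz[of "cis t"]) simp
    also have "\<dots> = tsum xs t" unfolding cos_ee sin_ee xs_def
      by (simp add: field_simps)
    finally show ?thesis .
  qed
  thus ?case by blast
next
  case (const c)
  have "complex_of_real c = tsum [(of_real c, 0)] t" for t by (simp add: ee_def)
  thus ?case by blast
next
  case (add f g)
  then obtain xs ys where "\<forall>t. complex_of_real (f (cis t)) = tsum xs t" "\<forall>t. complex_of_real (g (cis t)) = tsum ys t"
    by blast
  hence "\<forall>t. complex_of_real (f (cis t) + g (cis t)) = tsum (xs @ ys) t" by (simp add: tsum_append)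
  thus ?case by blast
next
  case (mult f g)
  then obtain xs ys where "\<forall>t. complex_of_real (f (cis t)) = tsum xs t" "\<forall>t. complex_of_real (g (cis t)) = tsum ys t"
    by blast
  hence "\<forall>t. complex_of_real (f (cis t) * g (cis t)) = tsum (mulP xs ys) t" by (simp add: tsum_mulP)
  thus ?case by blast
qed

lemma pf_trig:
  fixes g :: "complex \<Rightarrow> complex"
  assumes "polynomial_function g"
  shows "\<exists>xs. \<forall>t. g (cis t) = tsum xs t"
proof -
  have "real_polynomial_function (Re \<circ> g)" "real_polynomial_function (Im \<circ> g)"
    using assms bounded_linear_Re bounded_linear_Im unfolding polynomial_function_def by auto
  then obtain xs ys where xs: "\<forall>t. complex_of_real (Re (g (cis t))) = tsum xs t"
      and ys: "\<forall>t. complex_of_real (Im (g (cis t))) = tsum ys t"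
    using rpf_trig[of "Re \<circ> g"] rpf_trig[of "Im \<circ> g"] by auto
  have "g (cis t) = tsum (xs @ map (\<lambda>p. (\<i> * fst p, snd p)) ys) t" for t
    using complex_eq[of "g (cis t)"] xs ys by (simp add: tsum_append tsum_scale)
  thus ?thesis by blast
qed



lemma trig_approx:
  fixes f :: "real \<Rightarrow> complex"
  assumes cont: "continuous_on UNIV f" and per: "\<And>x. f (x + 2 * pi) = f x" and d: "0 < \<delta>"
  shows "\<exists>xs. \<forall>t\<in>{-pi..pi}. cmod (f t - tsum xs t) < \<delta>"
proof -
  define F where "F z = (if 0 \<le> Im z then f (arccos (Re z)) else f (- arccos (Re z)))" for z
  define S1 where "S1 = sphere (0::complex) 1 \<inter> {z. 0 \<le> Im z}"
  define S2 where "S2 = sphere (0::complex) 1 \<inter> {z. Im z \<le> 0}"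
  have U: "sphere 0 1 = S1 \<union> S2" by (auto simp: S1_def S2_def)
  have cS1: "closed S1" unfolding S1_def
    by (intro closed_Int closed_sphere closed_Collect_le continuous_intros)
  have cS2: "closed S2" unfolding S2_def
    by (intro closed_Int closed_sphere closed_Collect_le continuous_intros)
  have re: "-1 \<le> Re z \<and> Re z \<le> 1" if "z \<in> sphere 0 1" for z
    using that abs_Re_le_cmod[of z] by auto
  have c1: "continuous_on S1 (\<lambda>z. f (arccos (Re z)))"
    by (rule continuous_on_compose2[OF cont]) (auto intro!: continuous_intros simp: S1_def re)
  have c2: "continuous_on S2 (\<lambda>z. f (- arccos (Re z)))"
    by (rule continuous_on_compose2[OF cont]) (auto intro!: continuous_intros simp: S2_def re)
  have contF: "continuous_on (sphere 0 1) F"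
    unfolding U F_def
  proof (rule continuous_on_cases_local)
    show "closedin (top_of_set (S1 \<union> S2)) S1" using cS1 by (intro closed_subset) auto
    show "closedin (top_of_set (S1 \<union> S2)) S2" using cS2 by (intro closed_subset) auto
    show "continuous_on S1 (\<lambda>z. f (arccos (Re z)))" by (rule c1)
    show "continuous_on S2 (\<lambda>z. f (- arccos (Re z)))" by (rule c2)
    fix x assume x: "x \<in> S1 \<and> \<not> 0 \<le> Im x \<or> x \<in> S2 \<and> 0 \<le> Im x"
    hence im: "Im x = 0" and nx: "cmod x = 1" by (auto simp: S1_def S2_def)
    hence "\<bar>Re x\<bar> = 1" using cmod_eq_Re[of x] by simp
    hence "Re x = 1 \<or> Re x = -1" by auto
    thus "f (arccos (Re x)) = f (- arccos (Re x))"
    proof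
      assume "Re x = 1" thus ?thesis by simp
    next
      assume "Re x = -1" thus ?thesis using per[of "-pi"] by simp
    qed
  qed
  obtain g where pg: "polynomial_function g" and gF: "\<forall>z\<in>sphere 0 1. norm (F z - g z) < \<delta>"
    using Stone_Weierstrass_polynomial_function[OF compact_sphere contF d] by blast
  obtain xs where xs: "\<forall>t. g (cis t) = tsum xs t" using pf_trig[OF pg] by blast
  have Fcis: "F (cis t) = f t" if t: "t \<in> {-pi..pi}" for t
  proof -
    consider "0 \<le> t" | "t = -pi" | "-pi < t \<and> t < 0" using t by fastforce
    thus ?thesis
    proof cases
      case 1
      hence "0 \<le> sin t" using t by (intro sin_ge_zero) auto
      thus ?thesis using 1 t by (simp add: F_def arccos_cos)
    next
      case 2
      thus ?thesis using per[of "-pi"] by (simp add: F_def)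
    next
      case 3
      hence "0 < sin (- t)" by (intro sin_gt_zero) auto
      hence "\<not> 0 \<le> sin t" by simp
      thus ?thesis using 3 by (simp add: F_def arccos_cos2)
    qed
  qed
  have "\<forall>t\<in>{-pi..pi}. cmod (f t - tsum xs t) < \<delta>"
  proof
    fix t assume t: "t \<in> {-pi..pi}"
    have "cis t \<in> sphere 0 1" by simp
    hence "norm (F (cis t) - g (cis t)) < \<delta>" using gF by blast
    thus "cmod (f t - tsum xs t) < \<delta>" using Fcis[OF t] xs by simp
  qed
  thus ?thesis by blast
qed



definition Bm :: "(int \<Rightarrow> complex) \<Rightarrow> nat \<Rightarrow> nat \<Rightarrow> complex" where
  "Bm b = (\<lambda>j k. b (int j - int k))"

definition Dm :: "nat \<Rightarrow> (int \<Rightarrow> complex) \<Rightarrow> nat \<Rightarrow> nat \<Rightarrow> complex" where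
  "Dm n b = (\<lambda>j k. b ((int j - int k) mod int n) + b ((int j - int k) mod int n - int n))"

lemma D_eq_B:
  assumes bz: "\<And>m. \<bar>m\<bar> > int M0 \<Longrightarrow> b m = 0"
    and i1: "M0 \<le> i" and i2: "i + M0 < n" and l: "l < n"
  shows "Dm n b i l = Bm b i l"
proof (cases "int i - int l \<ge> 0")
  case True
  have "(int i - int l) mod int n = int i - int l" using True i2 l by (intro mod_pos_pos_trivial) auto
  moreover have "b (int i - int l - int n) = 0" using i2 True by (intro bz) auto
  ultimately show ?thesis by (simp add: Dm_def Bm_def)
next
  case False
  have "(int i - int l) mod int n = (int i - int l + int n) mod int n" by simp
  also have "\<dots> = int i - int l + int n" using False l by (intro mod_pos_pos_trivial) auto
  finally have e: "(int i - int l) mod int n = int i - int l + int n" .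
  have "b (int i - int l + int n) = 0" using i1 l by (intro bz) auto
  thus ?thesis using e by (simp add: Dm_def Bm_def)
qed

lemma B_band:
  assumes bz: "\<And>m. \<bar>m\<bar> > int M0 \<Longrightarrow> b m = 0"
  shows "\<bar>int i - int l\<bar> > int (m * M0) \<Longrightarrow> mp n (Bm b) m i l = 0"
proof (induction m arbitrary: l)
  case 0 thus ?case by auto
next
  case (Suc m)
  have "mp n (Bm b) m i k * Bm b k l = 0" for k
  proof (cases "\<bar>int i - int k\<bar> > int (m * M0)")
    case True thus ?thesis using Suc.IH by simp
  next
    case False
    hence "\<bar>int k - int l\<bar> > int M0" using Suc.prems by auto
    thus ?thesis using bz by (simp add: Bm_def)
  qed
  thus ?case by (simp add: mm_def)
qed

lemma powers_agree:
  assumes bz: "\<And>m. \<bar>m\<bar> > int M0 \<Longrightarrow> b m = 0"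
  shows "m * M0 \<le> i \<Longrightarrow> i + m * M0 < n \<Longrightarrow> j < n \<Longrightarrow> mp n (Dm n b) m i j = mp n (Bm b) m i j"
proof (induction m arbitrary: j)
  case 0 thus ?case by simp
next
  case (Suc m)
  have "mp n (Dm n b) m i l * Dm n b l j = mp n (Bm b) m i l * Bm b l j" if l: "l < n" for l
  proof -
    have e1: "mp n (Dm n b) m i l = mp n (Bm b) m i l" using Suc.prems l by (intro Suc.IH) auto
    show ?thesis
    proof (cases "\<bar>int i - int l\<bar> > int (m * M0)")
      case True thus ?thesis using e1 B_band[OF bz True] by simp
    next
      case False
      define c where "c = m * M0"
      have h: "\<bar>int i - int l\<bar> \<le> int c" using False by (simp add: c_def)
      have p: "c + M0 \<le> i" "i + (c + M0) < n" using Suc.prems by (simp_all add: c_def add.commute)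
      have "M0 \<le> l" "l + M0 < n" using h p by linarith+
      hence "Dm n b l j = Bm b l j" using Suc.prems by (intro D_eq_B[OF bz]) auto
      thus ?thesis using e1 by simp
    qed
  qed
  thus ?case by (simp add: mm_def)
qed

lemma se_agree:
  assumes bz: "\<And>m. \<bar>m\<bar> > int M0 \<Longrightarrow> b m = 0"
    and i1: "K * M0 \<le> i" and i2: "i + K * M0 < n" and j: "j < n"
  shows "se n (Dm n b) K i j = se n (Bm b) K i j"
proof -
  have "mp n (Dm n b) m i j = mp n (Bm b) m i j" if "m < K" for m
  proof (rule powers_agree[OF bz _ _ j])
    have "m * M0 \<le> K * M0" using that by simp
    thus "m * M0 \<le> i" "i + m * M0 < n" using i1 i2 by linarith+
  qed
  thus ?thesis by (simp add: se_def)
qed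

lemma card_bad_rows: "card {i. i < n \<and> \<not> (K * M0 \<le> i \<and> i + K * M0 < n)} \<le> 2 * (K * M0)"
proof -
  have "{i. i < n \<and> \<not> (K * M0 \<le> i \<and> i + K * M0 < n)} \<subseteq> {..<K * M0} \<union> {n - K * M0..<n}" by auto
  hence "card {i. i < n \<and> \<not> (K * M0 \<le> i \<and> i + K * M0 < n)} \<le> card ({..<K * M0} \<union> {n - K * M0..<n})"
    by (intro card_mono) auto
  also have "\<dots> \<le> card {..<K * M0} + card {n - K * M0..<n}" by (rule card_Un_le)
  also have "\<dots> \<le> 2 * (K * M0)" by simp
  finally show ?thesis .
qed



lemma dd_inj:
  assumes "0 < n"
  shows "inj_on (\<lambda>k. (int j - int k) mod int n) {..<n}"
proof
  fix a b assume a: "a \<in> {..<n}" and b: "b \<in> {..<n}"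
    and e: "(int j - int a) mod int n = (int j - int b) mod int n"
  hence "int n dvd ((int j - int a) - (int j - int b))" by (simp add: mod_eq_dvd_iff)
  hence d: "int n dvd (int b - int a)" by simp
  show "a = b"
  proof (rule ccontr)
    assume "a \<noteq> b"
    hence "int b - int a \<noteq> 0" by simp
    hence "\<bar>int n\<bar> \<le> \<bar>int b - int a\<bar>" using d by (rule dvd_imp_le_int)
    thus False using a b by auto
  qed
qed

lemma corr_entry:
  fixes b :: "int \<Rightarrow> complex"
  assumes bz: "\<And>m. \<bar>m\<bar> > int M0 \<Longrightarrow> b m = 0" and bB: "\<And>m. cmod (b m) \<le> Bx"
    and n: "0 < n" and x0: "0 \<le> x" and xn: "x < int n"
  shows "cmod (((of_nat n - of_int x) * b x + of_int x * b (x - int n)) / of_nat n - (b x + b (x - int n)))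
     \<le> (if x \<le> int M0 \<or> int n - x \<le> int M0 then 2 * real M0 * Bx / real n else 0)"
proof -
  have eq: "((of_nat n - of_int x) * b x + of_int x * b (x - int n)) / of_nat n - (b x + b (x - int n)) =
      - (of_int x * b x + (of_nat n - of_int x) * b (x - int n)) / of_nat n"
    using n by (simp add: field_simps)
  have B0: "0 \<le> Bx" using bB[of 0] norm_ge_zero[of "b 0"] by linarith
  have t1: "cmod (of_int x * b x) \<le> (if x \<le> int M0 then real M0 * Bx else 0)"
  proof (cases "x \<le> int M0")
    case True
    have "cmod (of_int x * b x) = real_of_int x * cmod (b x)" using x0 by (simp add: norm_mult)
    also have "\<dots> \<le> real M0 * Bx" using True x0 bB[of x] B0 by (intro mult_mono) auto
    finally show ?thesis using True by simp
  next
    case False thus ?thesis using bz[of x] x0 by simp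
  qed
  have t2: "cmod ((of_nat n - of_int x) * b (x - int n)) \<le> (if int n - x \<le> int M0 then real M0 * Bx else 0)"
  proof (cases "int n - x \<le> int M0")
    case True
    have e: "(of_nat n - of_int x :: complex) = of_real (real_of_int (int n - x))" by simp
    have "cmod ((of_nat n - of_int x) * b (x - int n)) = \<bar>real_of_int (int n - x)\<bar> * cmod (b (x - int n))"
      unfolding e norm_mult norm_of_real ..
    also have "\<bar>real_of_int (int n - x)\<bar> = real_of_int (int n - x)" using xn by simp
    finally have "cmod ((of_nat n - of_int x) * b (x - int n)) = real_of_int (int n - x) * cmod (b (x - int n))" .
    also have "\<dots> \<le> real M0 * Bx" using True xn bB[of "x - int n"] B0 by (intro mult_mono) auto
    finally show ?thesis using True by simp
  next
    case False thus ?thesis using bz[of "x - int n"] xn by simp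
  qed
  have "cmod (- (of_int x * b x + (of_nat n - of_int x) * b (x - int n)) / of_nat n) =
      cmod (of_int x * b x + (of_nat n - of_int x) * b (x - int n)) / real n"
    by (simp only: norm_divide norm_minus_cancel norm_of_nat)
  also have "\<dots> \<le> ((if x \<le> int M0 then real M0 * Bx else 0) + (if int n - x \<le> int M0 then real M0 * Bx else 0)) / real n"
    using n by (intro divide_right_mono order_trans[OF norm_triangle_ineq] add_mono t1 t2) auto
  also have "\<dots> \<le> (if x \<le> int M0 \<or> int n - x \<le> int M0 then 2 * real M0 * Bx / real n else 0)"
    using B0 n by (auto simp: field_simps)
  finally show ?thesis unfolding eq .
qed

lemma card_good_int: "card {x::int. 0 \<le> x \<and> x < int n \<and> (x \<le> int M0 \<or> int n - x \<le> int M0)} \<le> 2 * M0 + 1"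
proof -
  have "{x::int. 0 \<le> x \<and> x < int n \<and> (x \<le> int M0 \<or> int n - x \<le> int M0)} \<subseteq> {0..int M0} \<union> {int n - int M0..int n - 1}"
    by auto
  hence "card {x::int. 0 \<le> x \<and> x < int n \<and> (x \<le> int M0 \<or> int n - x \<le> int M0)} \<le> card ({0..int M0} \<union> {int n - int M0..int n - 1})"
    by (intro card_mono) auto
  also have "\<dots> \<le> card {0..int M0} + card {int n - int M0..int n - 1}" by (rule card_Un_le)
  also have "\<dots> = 2 * M0 + 1" by simp
  finally show ?thesis .
qed

lemma corr_nb:
  fixes b :: "int \<Rightarrow> complex"
  assumes bz: "\<And>m. \<bar>m\<bar> > int M0 \<Longrightarrow> b m = 0" and bB: "\<And>m. cmod (b m) \<le> Bx"
    and n: "0 < n"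
  shows "nb n (\<lambda>j k. let x = (int j - int k) mod int n in
      ((of_nat n - of_int x) * b x + of_int x * b (x - int n)) / of_nat n - (b x + b (x - int n)))
     (sqrt (real n * (real (2 * M0 + 1) * (2 * real M0 * Bx / real n)\<^sup>2)))"
    (is "nb n ?E _")
proof -
  define C where "C = 2 * real M0 * Bx / real n"
  define P where "P x = (0 \<le> x \<and> x < int n \<and> (x \<le> int M0 \<or> int n - x \<le> int M0))" for x :: int
  have B0: "0 \<le> Bx" using bB[of 0] norm_ge_zero[of "b 0"] by linarith
  have C0: "0 \<le> C" using B0 by (simp add: C_def)
  have ent: "(cmod (?E j k))\<^sup>2 \<le> (if P ((int j - int k) mod int n) then C\<^sup>2 else 0)" if "j < n" "k < n" for j k
  proof -
    define x where "x = (int j - int k) mod int n"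
    have x0: "0 \<le> x" and xn: "x < int n" using n by (simp_all add: x_def)
    have "cmod (?E j k) \<le> (if x \<le> int M0 \<or> int n - x \<le> int M0 then C else 0)"
      unfolding x_def[symmetric] Let_def C_def by (rule corr_entry[OF bz bB n x0 xn])
    hence "(cmod (?E j k))\<^sup>2 \<le> (if x \<le> int M0 \<or> int n - x \<le> int M0 then C else 0)\<^sup>2"
      by (intro power_mono) auto
    moreover have "(if x \<le> int M0 \<or> int n - x \<le> int M0 then C else 0)\<^sup>2 = (if P x then C\<^sup>2 else 0)"
      using x0 xn by (simp add: P_def)
    ultimately show ?thesis unfolding x_def by simp
  qed
  have row: "(\<Sum>k<n. (cmod (?E j k))\<^sup>2) \<le> C\<^sup>2 * real (2 * M0 + 1)" if j: "j < n" for j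
  proof -
    have "(\<Sum>k<n. (cmod (?E j k))\<^sup>2) \<le> (\<Sum>k<n. if P ((int j - int k) mod int n) then C\<^sup>2 else 0)"
      using j ent by (intro sum_mono) auto
    also have "\<dots> = C\<^sup>2 * real (card ({..<n} \<inter> {k. P ((int j - int k) mod int n)}))"
      by (simp add: sum.If_cases)
    also have "card ({..<n} \<inter> {k. P ((int j - int k) mod int n)}) \<le> card {x. P x}"
    proof (rule card_inj_on_le)
      show "inj_on (\<lambda>k. (int j - int k) mod int n) ({..<n} \<inter> {k. P ((int j - int k) mod int n)})"
        using dd_inj[OF n, of j] by (rule inj_on_subset) auto
      show "(\<lambda>k. (int j - int k) mod int n) ` ({..<n} \<inter> {k. P ((int j - int k) mod int n)}) \<subseteq> {x. P x}" by auto
      have "{x. P x} \<subseteq> {0..int n}" by (auto simp: P_def)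
      thus "finite {x. P x}" by (rule finite_subset) simp
    qed
    hence "C\<^sup>2 * real (card ({..<n} \<inter> {k. P ((int j - int k) mod int n)})) \<le> C\<^sup>2 * real (2 * M0 + 1)"
      using card_good_int[of n M0] unfolding P_def by (intro mult_left_mono) auto
    finally show ?thesis .
  qed
  have "(\<Sum>j<n. \<Sum>k<n. (cmod (?E j k))\<^sup>2) \<le> (\<Sum>j<n. C\<^sup>2 * real (2 * M0 + 1))"
    using row by (intro sum_mono) auto
  also have "\<dots> = real n * (real (2 * M0 + 1) * C\<^sup>2)" by simp
  finally have "sqrt (\<Sum>j<n. \<Sum>k<n. (cmod (?E j k))\<^sup>2) \<le> sqrt (real n * (real (2 * M0 + 1) * C\<^sup>2))"
    by (rule real_sqrt_le_mono)
  thus ?thesis using nb_frob[of n ?E] unfolding C_def by (rule nb_mono[rotated])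
qed



lemma main_est:
  assumes X: "nb n X r" and Y: "nb n Y r" and X': "nb n X' r" and Y': "nb n Y' r" and r: "0 \<le> r"
    and DX: "nb n (\<lambda>i j. X i j - X' i j) a" and DY: "nb n (\<lambda>i j. Y i j - Y' i j) a'"
    and a: "0 \<le> a" and a': "0 \<le> a'" and KL: "K \<le> L"
  shows "nb n (\<lambda>i j. (se n X L i j - se n Y L i j) - (se n X' K i j - se n Y' K i j))
     (exp r * a + exp r * a' + 2 * (exp r - (\<Sum>m<K. r ^ m / fact m)))"
proof -
  have h1: "nb n (\<lambda>i j. se n X L i j - se n X' L i j) (exp r * a)" by (rule nb_se_diff[OF X X' r DX a])
  have h2: "nb n (\<lambda>i j. se n Y L i j - se n Y' L i j) (exp r * a')" by (rule nb_se_diff[OF Y Y' r DY a'])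
  have h3: "nb n (\<lambda>i j. (se n X' L i j - se n Y' L i j) - (se n X' K i j - se n Y' K i j))
      (2 * (exp r - (\<Sum>m<K. r ^ m / fact m)))" by (rule nb_tail[OF X' Y' r KL])
  have "nb n (\<lambda>i j. (se n X L i j - se n X' L i j) - (se n Y L i j - se n Y' L i j) +
     ((se n X' L i j - se n Y' L i j) - (se n X' K i j - se n Y' K i j)))
     (exp r * a + exp r * a' + 2 * (exp r - (\<Sum>m<K. r ^ m / fact m)))"
    by (intro nb_add nb_diff h1 h2 h3)
  thus ?thesis by (rule nb_cong[rotated]) (simp add: algebra_simps)
qed

lemma fc_diff:
  assumes f: "continuous_on {-pi..pi} f" and g: "continuous_on {-pi..pi} g"
  shows "fourier_coeff (\<lambda>t. f t - g t) m = fourier_coeff f m - fourier_coeff g m"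
proof -
  have i1: "(\<lambda>t. f t * exp (- \<i> * of_int m * of_real t)) integrable_on {-pi..pi}"
    by (intro integrable_continuous_interval continuous_intros f)
  have i2: "(\<lambda>t. g t * exp (- \<i> * of_int m * of_real t)) integrable_on {-pi..pi}"
    by (intro integrable_continuous_interval continuous_intros g)
  have "integral {-pi..pi} (\<lambda>t. (f t - g t) * exp (- \<i> * of_int m * of_real t)) =
      integral {-pi..pi} (\<lambda>t. f t * exp (- \<i> * of_int m * of_real t) - g t * exp (- \<i> * of_int m * of_real t))"
    by (simp add: algebra_simps)
  also have "\<dots> = integral {-pi..pi} (\<lambda>t. f t * exp (- \<i> * of_int m * of_real t)) -
      integral {-pi..pi} (\<lambda>t. g t * exp (- \<i> * of_int m * of_real t))"
    by (rule integral_diff[OF i1 i2])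
  finally have eqI: "integral {-pi..pi} (\<lambda>t. (f t - g t) * exp (- \<i> * of_int m * of_real t)) =
      integral {-pi..pi} (\<lambda>t. f t * exp (- \<i> * of_int m * of_real t)) -
      integral {-pi..pi} (\<lambda>t. g t * exp (- \<i> * of_int m * of_real t))" .
  show ?thesis unfolding fourier_coeff_def eqI by (rule right_diff_distrib)
qed

lemma fc_tsum_zero:
  assumes "\<bar>m\<bar> > int (sum_list (map (\<lambda>p. nat \<bar>snd p\<bar>) xs))"
  shows "fourier_coeff (tsum xs) m = 0"
proof -
  have "(if snd p = m then fst p else 0) = 0" if "p \<in> set xs" for p
  proof -
    have "nat \<bar>snd p\<bar> \<le> sum_list (map (\<lambda>p. nat \<bar>snd p\<bar>) xs)"
      using that by (intro member_le_sum_list) auto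
    thus ?thesis using assms by auto
  qed
  hence "(\<Sum>p\<leftarrow>xs. if snd p = m then fst p else (0::complex)) = (\<Sum>p\<leftarrow>xs. 0)"
    by (intro arg_cong[of _ _ sum_list] map_cong) auto
  thus ?thesis by (simp add: fc_tsum)
qed

lemma fc_tsum_bound: "cmod (fourier_coeff (tsum xs) m) \<le> sum_list (map (\<lambda>p. cmod (fst p)) xs)"
  unfolding fc_tsum
proof (induction xs)
  case Nil thus ?case by simp
next
  case (Cons p xs)
  have "cmod (if snd p = m then fst p else 0) \<le> cmod (fst p)" by simp
  thus ?case using Cons by (simp add: order_trans[OF norm_triangle_ineq] add_mono)
qed



theorem mainTheorem2:
  fixes f :: "real \<Rightarrow> complex"
  assumes cont: "continuous_on UNIV f"
    and periodic: "\<And>x. f (x + 2 * pi) = f x"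
  shows "\<forall>\<epsilon>::real. \<epsilon> > 0 \<longrightarrow>
    (\<exists>N M :: nat. N > 0 \<and> M > 0 \<and>
      (\<forall>n > N. \<exists>R E :: complex mat.
          R \<in> carrier_mat n n \<and> E \<in> carrier_mat n n \<and>
          mat_exp (opt_circulant n f) - mat_exp (toeplitz_mat n f) = R + E \<and>
          vec_space.rank n R \<le> 2 * M \<and>
          spec_norm E \<le> \<epsilon>))"
proof (intro allI impI)
  fix \<epsilon> :: real assume \<epsilon>: "\<epsilon> > 0"
  have fc: "continuous_on {-pi..pi} f" using cont by (rule continuous_on_subset) auto
  have "bounded (f ` {-pi..pi})" by (intro compact_imp_bounded compact_continuous_image fc compact_Icc)
  then obtain G where G: "\<forall>t\<in>{-pi..pi}. cmod (f t) \<le> G" unfolding bounded_iff by auto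
  have G0: "0 \<le> G" using G norm_ge_zero[of "f 0"] by (meson order_trans atLeastAtMost_iff pi_ge_zero neg_le_0_iff_le)
  define r where "r = G + 2"
  have r0: "0 \<le> r" using G0 by (simp add: r_def)
  have "(\<lambda>K. \<Sum>m<K. r ^ m / fact m) \<longlonglongrightarrow> exp r"
    using exp_series_real[of r] by (simp add: sums_def)
  hence "\<forall>\<^sub>F K in sequentially. exp r - \<epsilon> / 4 < (\<Sum>m<K. r ^ m / fact m)"
    using \<epsilon> by (intro order_tendstoD(1)) auto
  then obtain K0 where "\<forall>K\<ge>K0. exp r - \<epsilon> / 4 < (\<Sum>m<K. r ^ m / fact m)"
    unfolding eventually_sequentially by blast
  hence "exp r - \<epsilon> / 4 < (\<Sum>m<K0. r ^ m / fact m)" by blast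
  hence K: "exp r - (\<Sum>m<K0. r ^ m / fact m) < \<epsilon> / 4" by linarith
  define K where "K = K0"
  note K = K[folded K_def]
  define \<delta> where "\<delta> = min 1 (\<epsilon> / (6 * exp r))"
  have d0: "0 < \<delta>" using \<epsilon> by (simp add: \<delta>_def)
  have d1: "\<delta> \<le> 1" by (simp add: \<delta>_def)
  have d2: "exp r * (2 * \<delta>) + exp r * \<delta> \<le> \<epsilon> / 2"
  proof -
    have "\<delta> \<le> \<epsilon> / (6 * exp r)" by (simp add: \<delta>_def)
    hence "exp r * \<delta> \<le> exp r * (\<epsilon> / (6 * exp r))" by (intro mult_left_mono) auto
    also have "\<dots> = \<epsilon> / 6" by simp
    finally have "exp r * \<delta> \<le> \<epsilon> / 6" .
    thus ?thesis by (simp add: algebra_simps)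
  qed
  obtain xs where xs: "\<forall>t\<in>{-pi..pi}. cmod (f t - tsum xs t) < \<delta>"
    using trig_approx[OF cont periodic d0] by blast
  define p where "p = tsum xs"
  define b where "b = fourier_coeff p"
  define M0 where "M0 = sum_list (map (\<lambda>p. nat \<bar>snd p\<bar>) xs)"
  define Bx where "Bx = sum_list (map (\<lambda>p. cmod (fst p)) xs)"
  have bz: "\<And>m. \<bar>m\<bar> > int M0 \<Longrightarrow> b m = 0" unfolding b_def p_def M0_def by (rule fc_tsum_zero)
  have bB: "\<And>m. cmod (b m) \<le> Bx" unfolding b_def p_def Bx_def by (rule fc_tsum_bound)
  define Q where "Q = real (2 * M0 + 1) * (2 * real M0 * Bx)\<^sup>2"
  define N where "N = nat \<lceil>Q / \<delta>\<^sup>2\<rceil> + 1"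
  define M where "M = K * M0 + 1"
  have main: "\<forall>n > N. \<exists>R E :: complex mat.
          R \<in> carrier_mat n n \<and> E \<in> carrier_mat n n \<and>
          mat_exp (opt_circulant n f) - mat_exp (toeplitz_mat n f) = R + E \<and>
          vec_space.rank n R \<le> 2 * M \<and>
          spec_norm E \<le> \<epsilon>"
  proof (intro allI impI)
    fix n assume nN: "n > N"
    have n0: "0 < n" using nN by simp
    have nQ: "Q / \<delta>\<^sup>2 < real n"
    proof -
      have "Q / \<delta>\<^sup>2 \<le> real (nat \<lceil>Q / \<delta>\<^sup>2\<rceil>)" by linarith
      also have "\<dots> < real n" using nN unfolding N_def by simp
      finally show ?thesis .
    qed
    define Amat where "Amat = toeplitz_mat n f"
    define Cmat where "Cmat = opt_circulant n f"
    have Ac: "Amat \<in> carrier_mat n n" and Cc: "Cmat \<in> carrier_mat n n"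
      by (simp_all add: Amat_def Cmat_def toeplitz_mat_def opt_circulant_def)
    have pc: "continuous_on {-pi..pi} p" unfolding p_def by (rule cont_tsum)
    have fpc: "continuous_on {-pi..pi} (\<lambda>t. f t - p t)" by (intro continuous_intros fc pc)
    have fpb: "\<forall>t\<in>{-pi..pi}. cmod (f t - p t) \<le> \<delta>" using xs by (auto simp: p_def less_imp_le)
    have pG: "\<forall>t\<in>{-pi..pi}. cmod (p t) \<le> G + \<delta>"
    proof
      fix t assume t: "t \<in> {-pi..pi}"
      have "cmod (p t) \<le> cmod (f t) + cmod (f t - p t)" using norm_triangle_sub[of "p t" "f t"] by (simp add: norm_minus_commute)
      thus "cmod (p t) \<le> G + \<delta>" using G fpb t by fastforce
    qed
    have h_A: "nb n (mf Amat) G"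
      by (rule nb_cong[OF _ toeplitz_nb[OF fc G]]) (simp add: mf_def Amat_def toeplitz_mat_def)
    have h_C: "nb n (mf Cmat) G" unfolding Cmat_def by (rule optcirc_nb[OF n0 toeplitz_nb[OF fc G]])
    have h_B: "nb n (Bm b) (G + \<delta>)"
      unfolding Bm_def b_def by (rule toeplitz_nb[OF pc pG])
    have h_Cp: "nb n (mf (opt_circulant n p)) (G + \<delta>)" by (rule optcirc_nb[OF n0 toeplitz_nb[OF pc pG]])
    have h_AB: "nb n (\<lambda>i j. mf Amat i j - Bm b i j) \<delta>"
      by (rule nb_cong[OF _ toeplitz_nb[OF fpc fpb]])
         (simp add: mf_def Amat_def toeplitz_mat_def Bm_def b_def fc_diff[OF fc pc])
    have occ: "opt_circ_coeff n (\<lambda>t. f t - p t) d = opt_circ_coeff n f d - opt_circ_coeff n p d" for d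
    proof -
      have "opt_circ_coeff n (\<lambda>t. f t - p t) d =
         ((of_nat n - of_nat d) * (fourier_coeff f (int d) - fourier_coeff p (int d))
          + of_nat d * (fourier_coeff f (int d - int n) - fourier_coeff p (int d - int n))) / of_nat n"
        by (simp only: opt_circ_coeff_def fc_diff[OF fc pc])
      also have "\<dots> = (((of_nat n - of_nat d) * fourier_coeff f (int d) + of_nat d * fourier_coeff f (int d - int n))
          - ((of_nat n - of_nat d) * fourier_coeff p (int d) + of_nat d * fourier_coeff p (int d - int n))) / of_nat n"
        by (simp only: algebra_simps)
      also have "\<dots> = opt_circ_coeff n f d - opt_circ_coeff n p d"
        by (simp only: opt_circ_coeff_def diff_divide_distrib)
      finally show ?thesis .
    qed
    have h_CCp: "nb n (\<lambda>i j. mf Cmat i j - mf (opt_circulant n p) i j) \<delta>"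
      by (rule nb_cong[OF _ optcirc_nb[OF n0 toeplitz_nb[OF fpc fpb]]])
         (simp add: mf_def Cmat_def opt_circulant_def occ)
    have corr: "sqrt (real n * (real (2 * M0 + 1) * (2 * real M0 * Bx / real n)\<^sup>2)) \<le> \<delta>"
    proof -
      have "real n * (real (2 * M0 + 1) * (2 * real M0 * Bx / real n)\<^sup>2) = Q / real n"
        using n0 by (simp add: Q_def power2_eq_square field_simps)
      also have "\<dots> \<le> \<delta>\<^sup>2"
      proof -
        have "Q < \<delta>\<^sup>2 * real n" using nQ d0 by (simp add: field_simps)
        thus ?thesis using n0 by (simp add: field_simps)
      qed
      finally show ?thesis using d0 by (simp add: real_le_lsqrt real_sqrt_le_iff)
    qed
    have h_corr: "nb n (\<lambda>i j. mf (opt_circulant n p) i j - Dm n b i j) \<delta>"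
    proof (rule nb_cong[OF _ nb_mono[OF corr_nb[OF bz bB n0] corr]])
      fix i j assume i: "i < n" and j: "j < n"
      define x where "x = (int i - int j) mod int n"
      have x0: "0 \<le> x" using n0 by (simp add: x_def)
      show "(let x = (int i - int j) mod int n in
            ((of_nat n - of_int x) * b x + of_int x * b (x - int n)) / of_nat n - (b x + b (x - int n))) =
          mf (opt_circulant n p) i j - Dm n b i j"
        unfolding x_def[symmetric] Let_def using i j x0
        by (simp add: mf_def opt_circulant_def opt_circ_coeff_def Dm_def b_def x_def[symmetric])
    qed
    have h_D: "nb n (Dm n b) (G + \<delta> + \<delta>)"
      by (rule nb_cong[OF _ nb_diff[OF h_Cp h_corr]]) simp
    have h_CD: "nb n (\<lambda>i j. mf Cmat i j - Dm n b i j) (\<delta> + \<delta>)"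
      by (rule nb_cong[OF _ nb_add[OF h_CCp h_corr]]) simp
    have rA: "nb n (mf Amat) r" using h_A by (rule nb_mono) (simp add: r_def)
    have rC: "nb n (mf Cmat) r" using h_C by (rule nb_mono) (simp add: r_def)
    have rB: "nb n (Bm b) r" using h_B by (rule nb_mono) (use d1 in \<open>simp add: r_def\<close>)
    have rD: "nb n (Dm n b) r" using h_D by (rule nb_mono) (use d1 in \<open>simp add: r_def\<close>)
    define bnd where "bnd = exp r * (\<delta> + \<delta>) + exp r * \<delta> + 2 * (exp r - (\<Sum>m<K. r ^ m / fact m))"
    have bnd_le: "bnd \<le> \<epsilon>" using d2 K by (simp add: bnd_def)
    have bnd0: "0 \<le> bnd" using d0 exp_partial_le[OF r0, of K] by (simp add: bnd_def)
    define Rf where "Rf = (\<lambda>i j. se n (Dm n b) K i j - se n (Bm b) K i j)"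
    define Rmat where "Rmat = mat n n (\<lambda>(i, j). Rf i j)"
    define Emat where "Emat = mat_exp Cmat - mat_exp Amat - Rmat"
    have eC: "mat_exp Cmat \<in> carrier_mat n n" and eA: "mat_exp Amat \<in> carrier_mat n n"
      using Ac Cc by (auto simp: mat_exp_def)
    have Rc: "Rmat \<in> carrier_mat n n" by (simp add: Rmat_def)
    have Ec: "Emat \<in> carrier_mat n n" unfolding Emat_def by (rule minus_carrier_mat[OF Rc])
    have est: "nb n (\<lambda>i j. (se n (mf Cmat) L i j - se n (mf Amat) L i j) - Rf i j) bnd" if "K \<le> L" for L
      unfolding bnd_def Rf_def
      by (rule main_est[OF rC rA rD rB r0 h_CD h_AB _ _ that]) (use d0 in auto)
    have lim: "(\<lambda>L. (se n (mf Cmat) L i j - se n (mf Amat) L i j) - Rf i j) \<longlonglongrightarrow>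
        ((\<Sum>m. mp n (mf Cmat) m i j / of_nat (fact m)) - (\<Sum>m. mp n (mf Amat) m i j / of_nat (fact m))) - Rf i j"
      if "i < n" "j < n" for i j
      by (intro tendsto_diff tendsto_const se_lim[OF rC r0 that] se_lim[OF rA r0 that])
    have nbW: "nb n (\<lambda>i j. ((\<Sum>m. mp n (mf Cmat) m i j / of_nat (fact m)) - (\<Sum>m. mp n (mf Amat) m i j / of_nat (fact m))) - Rf i j) bnd"
      by (rule nb_limit[OF lim est]) auto
    have nbE: "nb n (mf Emat) bnd"
      by (rule nb_cong[OF _ nbW])
         (use Ac Cc eC eA in \<open>simp add: mf_def Emat_def Rmat_def mat_exp_entry[OF Cc] mat_exp_entry[OF Ac]\<close>)
    have spec: "spec_norm Emat \<le> \<epsilon>" using spec_norm_le[OF Ec nbE bnd0] bnd_le by linarith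
    define S where "S = {i. i < n \<and> \<not> (K * M0 \<le> i \<and> i + K * M0 < n)}"
    have rank: "vec_space.rank n Rmat \<le> 2 * M"
    proof -
      have "vec_space.rank n Rmat \<le> card S"
      proof (rule rank_rows[OF _ _ Rc])
        show "finite S" "S \<subseteq> {..<n}" by (auto simp: S_def)
        fix i j assume "i < n" "j < n" "i \<notin> S"
        hence "K * M0 \<le> i" "i + K * M0 < n" "j < n" by (auto simp: S_def)
        thus "Rmat $$ (i, j) = 0" using se_agree[OF bz] by (simp add: Rmat_def Rf_def)
      qed
      also have "card S \<le> 2 * (K * M0)" unfolding S_def by (rule card_bad_rows)
      also have "\<dots> \<le> 2 * M" by (simp add: M_def)
      finally show ?thesis .
    qed
    have eq: "mat_exp Cmat - mat_exp Amat = Rmat + Emat"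
      by (rule eq_matI) (use eC eA Rc in \<open>auto simp: Emat_def\<close>)
    show "\<exists>R E :: complex mat.
          R \<in> carrier_mat n n \<and> E \<in> carrier_mat n n \<and>
          mat_exp (opt_circulant n f) - mat_exp (toeplitz_mat n f) = R + E \<and>
          vec_space.rank n R \<le> 2 * M \<and>
          spec_norm E \<le> \<epsilon>"
      using Rc Ec eq rank spec unfolding Amat_def Cmat_def by blast
  qed
  show "\<exists>N M :: nat. N > 0 \<and> M > 0 \<and>
      (\<forall>n > N. \<exists>R E :: complex mat.
          R \<in> carrier_mat n n \<and> E \<in> carrier_mat n n \<and>
          mat_exp (opt_circulant n f) - mat_exp (toeplitz_mat n f) = R + E \<and>
          vec_space.rank n R \<le> 2 * M \<and>
          spec_norm E \<le> \<epsilon>)"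
    using main by (intro exI[of _ N] exI[of _ M]) (simp add: N_def M_def)
qed

end
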